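(* Let $(X,d)$ be a u.l.f. metric space, $h\colon X\to\mathbb{R}$ coarse, $\beta\in\mathbb{R}$, and $\varphi$ a $(\sigma_h,\beta)$-KMS state on $\mathrm{C}^*_u(X)$. Define $\psi$ on $\mathrm{C}^*_u(X)$ by $$\psi(a)=\lim_{F,\mathcal{F}}\sum_{x\in F}a_{x,x}\varphi(e_{x,x}),\qquad a=[a_{x,y}]\in\mathrm{C}^*_u(X),$$ where $\mathcal{F}$ is the net of finite subsets of $X$ ordered by inclusion. Then $\psi$ is a well-defined positive functional, and: (1) $\psi$ is strongly continuous and satisfies the $(\sigma_h,\beta)$-KMS condition; (2) $\varphi-\psi$ is a positive functional which satisfies the $(\sigma_h,\beta)$-KMS condition and vanishes on $\mathcal{K}(\ell_2(X))$.
   Context: A metric space is u.l.f. if for every $r>0$ the cardinalities of its balls of radius $r$ are uniformly bounded. $a_{x,y}=\langle a\delta_y,\delta_x\rangle$ and $\mathrm{C}^*_u(X)$ is the norm closure of the $^*$-algebra of operators $a$ with $\sup\{d(x,y):a_{x,y}\neq0\}<\infty$. $e_{x,x}$ is the rank-one projection onto $\mathbb{C}\delta_x$. $h$ is coarse if for each $r>0$ there is $s>0$ with $d(x,y)<r\Rightarrow|h(x)-h(y)|<s$. $\sigma_{h,t}(a)=e^{it\bar h}ae^{-it\bar h}$, $e^{it\bar h}\delta_x=e^{ith(x)}\delta_x$. A functional $\varphi$ satisfies the $(\sigma_h,\beta)$-KMS condition if $\varphi(a\sigma_{h,i\beta}(b))=\varphi(ba)$ for all $a$ and all analytic $b$ (those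 for which $t\mapsto\sigma_{h,t}(b)$ extends to an entire function); a KMS state is a state satisfying it. Strongly continuous means continuous on bounded sets with respect to the strong operator topology. *)

theory Defs
  imports "HOL-Analysis.Analysis"
begin

text \<open>Matrices indexed by the points of X represent operators on ell_2(X):
  a x y is the entry a_{x,y} = <a delta_y, delta_x>.\<close>

type_synonym 'x mat = "'x \<Rightarrow> 'x \<Rightarrow> complex"

definition l2 :: "('x \<Rightarrow> complex) set" where
  "l2 = {v. (\<lambda>x. (cmod (v x))\<^sup>2) summable_on UNIV}"

definition l2norm :: "('x \<Rightarrow> complex) \<Rightarrow> real" where
  "l2norm v = sqrt (infsum (\<lambda>x. (cmod (v x))\<^sup>2) UNIV)"

definition l2inner :: "('x \<Rightarrow> complex) \<Rightarrow> ('x \<Rightarrow> complex) \<Rightarrow> complex" where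
  "l2inner u v = infsum (\<lambda>x. u x * cnj (v x)) UNIV"

definition mapply :: "'x mat \<Rightarrow> ('x \<Rightarrow> complex) \<Rightarrow> ('x \<Rightarrow> complex)" where
  "mapply a v = (\<lambda>x. infsum (\<lambda>y. a x y * v y) UNIV)"

definition vdiff :: "('x \<Rightarrow> complex) \<Rightarrow> ('x \<Rightarrow> complex) \<Rightarrow> ('x \<Rightarrow> complex)" where
  "vdiff u v = (\<lambda>x. u x - v x)"

definition bounded_op :: "'x mat \<Rightarrow> bool" where
  "bounded_op a \<longleftrightarrow>
     (\<forall>v\<in>l2. \<forall>x. (\<lambda>y. a x y * v y) summable_on UNIV) \<and>
     (\<exists>C. \<forall>v\<in>l2. mapply a v \<in> l2 \<and> l2norm (mapply a v) \<le> C * l2norm v)"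

definition opnorm :: "'x mat \<Rightarrow> real" where
  "opnorm a = Sup {l2norm (mapply a v) | v. v \<in> l2 \<and> l2norm v \<le> 1}"

definition madd :: "'x mat \<Rightarrow> 'x mat \<Rightarrow> 'x mat" where
  "madd a b = (\<lambda>x y. a x y + b x y)"

definition msub :: "'x mat \<Rightarrow> 'x mat \<Rightarrow> 'x mat" where
  "msub a b = (\<lambda>x y. a x y - b x y)"

definition mscale :: "complex \<Rightarrow> 'x mat \<Rightarrow> 'x mat" where
  "mscale c a = (\<lambda>x y. c * a x y)"

definition mmult :: "'x mat \<Rightarrow> 'x mat \<Rightarrow> 'x mat" where
  "mmult a b = (\<lambda>x z. infsum (\<lambda>y. a x y * b y z) UNIV)"

definition ematrix :: "'x \<Rightarrow> 'x mat" where
  "ematrix x = (\<lambda>u v. if u = x \<and> v = x then 1 else 0)"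

definition ulf :: "'x::metric_space itself \<Rightarrow> bool" where
  "ulf _ \<longleftrightarrow> (\<forall>r>0. \<exists>N::nat. \<forall>x::'x. finite (ball x r) \<and> card (ball x r) \<le> N)"

definition coarse_fun :: "('x::metric_space \<Rightarrow> real) \<Rightarrow> bool" where
  "coarse_fun h \<longleftrightarrow> (\<forall>r>0. \<exists>s>0. \<forall>x y. dist x y < r \<longrightarrow> \<bar>h x - h y\<bar> < s)"

definition finite_prop :: "'x::metric_space mat \<Rightarrow> bool" where
  "finite_prop a \<longleftrightarrow> (\<exists>r. \<forall>x y. a x y \<noteq> 0 \<longrightarrow> dist x y \<le> r)"

definition uroe :: "'x::metric_space mat set" where
  "uroe = {a. bounded_op a \<and>
     (\<forall>\<epsilon>>0. \<exists>b. bounded_op b \<and> finite_prop b \<and> opnorm (msub a b) < \<epsilon>)}"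

definition pos_op :: "'x mat \<Rightarrow> bool" where
  "pos_op a \<longleftrightarrow> bounded_op a \<and>
     (\<forall>v\<in>l2. Im (l2inner (mapply a v) v) = 0 \<and> Re (l2inner (mapply a v) v) \<ge> 0)"

definition lin_functional :: "'x mat set \<Rightarrow> ('x mat \<Rightarrow> complex) \<Rightarrow> bool" where
  "lin_functional A \<phi> \<longleftrightarrow>
     (\<forall>a\<in>A. \<forall>b\<in>A. \<phi> (madd a b) = \<phi> a + \<phi> b) \<and>
     (\<forall>c. \<forall>a\<in>A. \<phi> (mscale c a) = c * \<phi> a)"

definition pos_functional :: "'x mat set \<Rightarrow> ('x mat \<Rightarrow> complex) \<Rightarrow> bool" where
  "pos_functional A \<phi> \<longleftrightarrow> lin_functional A \<phi> \<and>
     (\<forall>a\<in>A. pos_op a \<longrightarrow> Im (\<phi> a) = 0 \<and> Re (\<phi> a) \<ge> 0)"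

definition functional_norm :: "'x mat set \<Rightarrow> ('x mat \<Rightarrow> complex) \<Rightarrow> real" where
  "functional_norm A \<phi> = Sup {cmod (\<phi> a) | a. a \<in> A \<and> opnorm a \<le> 1}"

definition is_state :: "'x mat set \<Rightarrow> ('x mat \<Rightarrow> complex) \<Rightarrow> bool" where
  "is_state A \<phi> \<longleftrightarrow> pos_functional A \<phi> \<and> functional_norm A \<phi> = 1"

text \<open>sigma_{h,t}(a) = e^{i t h} a e^{-i t h}, t real.\<close>
definition sigma :: "('x \<Rightarrow> real) \<Rightarrow> real \<Rightarrow> 'x mat \<Rightarrow> 'x mat" where
  "sigma h t a = (\<lambda>x y. exp (\<i> * of_real t * of_real (h x)) * a x y * exp (- \<i> * of_real t * of_real (h y)))"

definition entire_op :: "(complex \<Rightarrow> 'x mat) \<Rightarrow> bool" where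
  "entire_op F \<longleftrightarrow> (\<forall>z. \<exists>D. bounded_op D \<and>
     ((\<lambda>w. opnorm (msub (mscale (1 / (w - z)) (msub (F w) (F z))) D)) \<longlongrightarrow> 0) (at z))"

text \<open>F is an entire extension (within A) of t |-> sigma_{h,t}(b); b is analytic iff such F exists,
  and then sigma_{h,z}(b) = F z.\<close>
definition analytic_ext :: "'x mat set \<Rightarrow> ('x \<Rightarrow> real) \<Rightarrow> 'x mat \<Rightarrow> (complex \<Rightarrow> 'x mat) \<Rightarrow> bool" where
  "analytic_ext A h b F \<longleftrightarrow> (\<forall>z. F z \<in> A) \<and> entire_op F \<and>
     (\<forall>t::real. F (of_real t) = sigma h t b)"

definition kms_condition :: "'x mat set \<Rightarrow> ('x \<Rightarrow> real) \<Rightarrow> real \<Rightarrow> ('x mat \<Rightarrow> complex) \<Rightarrow> bool" where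
  "kms_condition A h \<beta> \<phi> \<longleftrightarrow>
     (\<forall>a\<in>A. \<forall>b\<in>A. \<forall>F. analytic_ext A h b F \<longrightarrow>
        \<phi> (mmult a (F (\<i> * of_real \<beta>))) = \<phi> (mmult b a))"

text \<open>Strong continuity: continuity on each norm-bounded subset of A w.r.t. the strong
  operator topology (convergence of filters/nets).\<close>
definition strongly_continuous :: "'x mat set \<Rightarrow> ('x mat \<Rightarrow> complex) \<Rightarrow> bool" where
  "strongly_continuous A \<phi> \<longleftrightarrow>
     (\<forall>R. \<forall>a\<in>A. opnorm a \<le> R \<longrightarrow>
       (\<forall>F :: 'x mat filter.
          eventually (\<lambda>b. b \<in> A \<and> opnorm b \<le> R) F \<longrightarrow>
          (\<forall>v\<in>l2. ((\<lambda>b. l2norm (vdiff (mapply b v) (mapply a v))) \<longlongrightarrow> 0) F) \<longrightarrow>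
          (\<phi> \<longlongrightarrow> \<phi> a) F))"

definition compact_op :: "'x mat \<Rightarrow> bool" where
  "compact_op a \<longleftrightarrow> bounded_op a \<and>
     (\<forall>v :: nat \<Rightarrow> ('x \<Rightarrow> complex). (\<forall>n. v n \<in> l2 \<and> l2norm (v n) \<le> 1) \<longrightarrow>
        (\<exists>r w. strict_mono r \<and> w \<in> l2 \<and>
           (\<lambda>n. l2norm (vdiff (mapply a (v (r n))) w)) \<longlonglongrightarrow> 0))"

end

theory Submission
  imports Defs "HOL-Complex_Analysis.Complex_Analysis"
begin


lemma l2_iff: "v \<in> l2 \<longleftrightarrow> (\<lambda>x. (cmod (v x))\<^sup>2) summable_on UNIV"
  by (simp add: l2_def)

lemma l2norm_sq: "(l2norm v)\<^sup>2 = infsum (\<lambda>x. (cmod (v x))\<^sup>2) UNIV"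
proof -
  have "infsum (\<lambda>x. (cmod (v x))\<^sup>2) UNIV \<ge> 0" by (rule Infinite_Sum.infsum_nonneg) simp
  then show ?thesis unfolding l2norm_def by simp
qed

lemma sqsum_nonneg: "infsum (\<lambda>x. (cmod (v x))\<^sup>2) UNIV \<ge> 0"
  by (rule Infinite_Sum.infsum_nonneg) simp

lemma l2norm_nonneg: "l2norm v \<ge> 0"
  unfolding l2norm_def using sqsum_nonneg[of v] by simp

lemma amgm_t:
  fixes a b t :: real assumes "t > 0"
  shows "2 * (a * b) \<le> t * a\<^sup>2 + b\<^sup>2 / t"
proof -
  have "0 \<le> (t * a - b)\<^sup>2 / t" using assms by simp
  also have "\<dots> = t * a\<^sup>2 - 2 * (a*b) + b\<^sup>2 / t" using assms
    by (simp add: power2_eq_square field_simps)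
  finally show ?thesis by simp
qed

lemma l2_abs_prod_summable:
  assumes "u \<in> l2" "v \<in> l2"
  shows "(\<lambda>x. cmod (u x) * cmod (v x)) summable_on UNIV"
proof (rule summable_on_comparison_test)
  show "(\<lambda>x. ((cmod (u x))\<^sup>2 + (cmod (v x))\<^sup>2)) summable_on UNIV"
    using assms by (intro summable_on_add) (auto simp: l2_iff)
  show "cmod (u x) * cmod (v x) \<le> (cmod (u x))\<^sup>2 + (cmod (v x))\<^sup>2" for x
  proof -
    have "2 * (cmod (u x) * cmod (v x)) \<le> (cmod (u x))\<^sup>2 + (cmod (v x))\<^sup>2"
      using amgm_t[of 1 "cmod (u x)" "cmod (v x)"] by simp
    moreover have "0 \<le> cmod (u x) * cmod (v x)" by simp
    ultimately show ?thesis by linarith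
  qed
qed auto

lemma l2_prod_abs_summable:
  assumes "u \<in> l2" "v \<in> l2"
  shows "(\<lambda>x. norm (u x * v x)) summable_on UNIV"
  using l2_abs_prod_summable[OF assms] by (simp add: norm_mult)

lemma l2_prod_summable:
  assumes "u \<in> l2" "v \<in> l2"
  shows "(\<lambda>x. u x * v x) summable_on UNIV"
  by (rule Infinite_Sum.abs_summable_summable[OF l2_prod_abs_summable[OF assms]])

lemma l2_cnj: "v \<in> l2 \<Longrightarrow> (\<lambda>x. cnj (v x)) \<in> l2"
  by (simp add: l2_iff)

lemma l2norm_cnj: "l2norm (\<lambda>x. cnj (v x)) = l2norm v"
  by (simp add: l2norm_def)

lemma l2_zero_if_norm0:
  assumes "v \<in> l2" "l2norm v = 0" shows "v x = 0"
proof -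
  have "infsum (\<lambda>x. (cmod (v x))\<^sup>2) UNIV \<le> 0"
    using assms(2) l2norm_sq[of v] by simp
  then have "(cmod (v x))\<^sup>2 = 0"
    by (rule nonneg_infsum_le_0D) (use assms in \<open>auto simp: l2_iff\<close>)
  then show ?thesis by simp
qed

lemma cs_real:
  assumes "u \<in> l2" "v \<in> l2"
  shows "infsum (\<lambda>x. cmod (u x) * cmod (v x)) UNIV \<le> l2norm u * l2norm v"
proof -
  define A where "A = infsum (\<lambda>x. (cmod (u x))\<^sup>2) UNIV"
  define B where "B = infsum (\<lambda>x. (cmod (v x))\<^sup>2) UNIV"
  define S where "S = infsum (\<lambda>x. cmod (u x) * cmod (v x)) UNIV"
  have A0: "A \<ge> 0" and B0: "B \<ge> 0" unfolding A_def B_def by (auto intro: infsum_nonneg)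
  have nu: "l2norm u = sqrt A" and nv: "l2norm v = sqrt B"
    unfolding A_def B_def l2norm_def by auto
  have key: "2 * S \<le> t * A + B / t" if "t > 0" for t
  proof -
    have "2 * S = infsum (\<lambda>x. 2 * (cmod (u x) * cmod (v x))) UNIV"
      unfolding S_def by (simp add: infsum_cmult_right')
    also have "\<dots> \<le> infsum (\<lambda>x. t * (cmod (u x))\<^sup>2 + (cmod (v x))\<^sup>2 / t) UNIV"
      apply (rule infsum_mono)
      prefer 3 using amgm_t[OF that] apply (simp only:)
      using l2_abs_prod_summable[OF assms] assms that
      by (auto simp: l2_iff intro!: summable_on_add summable_on_cmult_right summable_on_cmult_left
             summable_on_cmult_right[where c=2] amgm_t simp: divide_inverse)
    also have "\<dots> = t * A + B / t"
      unfolding A_def B_def using assms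
      by (subst infsum_add) (auto simp: l2_iff infsum_cmult_right' divide_inverse infsum_cmult_left'
          intro!: summable_on_cmult_right summable_on_cmult_left)
    finally show ?thesis .
  qed
  show ?thesis
  proof (cases "A = 0 \<or> B = 0")
    case True
    then have "\<forall>x. cmod (u x) * cmod (v x) = 0"
      using l2_zero_if_norm0[OF assms(1)] l2_zero_if_norm0[OF assms(2)] nu nv by auto
    then have "(\<lambda>x. cmod (u x) * cmod (v x)) = (\<lambda>_. 0)" by auto
    then have "S = 0" unfolding S_def by simp
    then have "S = 0" by simp
    then show ?thesis unfolding S_def[symmetric] nu nv using A0 B0 by simp
  next
    case False
    then have Ap: "A > 0" and Bp: "B > 0" using A0 B0 by auto
    define t where "t = sqrt B / sqrt A"
    have tp: "t > 0" using Ap Bp t_def by simp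
    have sA: "sqrt A * sqrt A = A" and sB: "sqrt B * sqrt B = B" using A0 B0 by auto
    have sAp: "sqrt A > 0" and sBp: "sqrt B > 0" using Ap Bp by auto
    have "t * A = sqrt A * sqrt B" unfolding t_def
      by (subst sA[symmetric]) (use sAp in \<open>simp add: field_simps\<close>)
    moreover have "B / t = sqrt A * sqrt B" unfolding t_def
      by (subst sB[symmetric]) (use sAp sBp in \<open>simp add: field_simps\<close>)
    ultimately have "2 * S \<le> 2 * (sqrt A * sqrt B)" using key[OF tp] by simp
    then show ?thesis using nu nv S_def by simp
  qed
qed

lemma cs_complex:
  assumes "u \<in> l2" "v \<in> l2"
  shows "cmod (infsum (\<lambda>x. u x * v x) UNIV) \<le> l2norm u * l2norm v"
proof -
  have "cmod (infsum (\<lambda>x. u x * v x) UNIV) \<le> infsum (\<lambda>x. norm (u x * v x)) UNIV"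
    by (rule Infinite_Sum.norm_infsum_bound[OF l2_prod_abs_summable[OF assms]])
  also have "\<dots> = infsum (\<lambda>x. cmod (u x) * cmod (v x)) UNIV" by (simp add: norm_mult)
  also have "\<dots> \<le> l2norm u * l2norm v" by (rule cs_real[OF assms])
  finally show ?thesis .
qed

lemma cs_inner:
  assumes "u \<in> l2" "v \<in> l2"
  shows "cmod (l2inner u v) \<le> l2norm u * l2norm v"
  using cs_complex[OF assms(1) l2_cnj[OF assms(2)]] unfolding l2inner_def l2norm_cnj .

lemma l2_add:
  assumes "u \<in> l2" "v \<in> l2"
  shows "(\<lambda>x. u x + v x) \<in> l2" and "l2norm (\<lambda>x. u x + v x) \<le> l2norm u + l2norm v"
proof -
  have pt: "(cmod (u x + v x))\<^sup>2 \<le> (cmod (u x))\<^sup>2 + 2 * (cmod (u x) * cmod (v x)) + (cmod (v x))\<^sup>2" for x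
  proof -
    have "cmod (u x + v x) \<le> cmod (u x) + cmod (v x)" by (rule norm_triangle_ineq)
    then have "(cmod (u x + v x))\<^sup>2 \<le> (cmod (u x) + cmod (v x))\<^sup>2"
      by (intro power_mono) auto
    then show ?thesis by (simp add: power2_sum)
  qed
  have s: "(\<lambda>x. (cmod (u x))\<^sup>2 + 2 * (cmod (u x) * cmod (v x)) + (cmod (v x))\<^sup>2) summable_on UNIV"
    using assms l2_abs_prod_summable[OF assms]
    by (intro summable_on_add summable_on_cmult_right) (auto simp: l2_iff)
  show 1: "(\<lambda>x. u x + v x) \<in> l2" unfolding l2_iff
    by (rule summable_on_comparison_test[OF s pt]) auto
  have "(l2norm (\<lambda>x. u x + v x))\<^sup>2 \<le> infsum (\<lambda>x. (cmod (u x))\<^sup>2 + 2 * (cmod (u x) * cmod (v x)) + (cmod (v x))\<^sup>2) UNIV"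
    unfolding l2norm_sq using 1 s pt by (intro infsum_mono) (auto simp: l2_iff)
  also have "\<dots> = (l2norm u)\<^sup>2 + 2 * infsum (\<lambda>x. cmod (u x) * cmod (v x)) UNIV + (l2norm v)\<^sup>2"
    unfolding l2norm_sq using assms l2_abs_prod_summable[OF assms]
    by (subst infsum_add, auto simp: l2_iff intro!: summable_on_add summable_on_cmult_right)
       (subst infsum_add, auto simp: l2_iff intro!: summable_on_cmult_right simp: infsum_cmult_right')
  also have "\<dots> \<le> (l2norm u)\<^sup>2 + 2 * (l2norm u * l2norm v) + (l2norm v)\<^sup>2"
    using cs_real[OF assms] by simp
  also have "\<dots> = (l2norm u + l2norm v)\<^sup>2" by (simp add: power2_sum)
  finally show "l2norm (\<lambda>x. u x + v x) \<le> l2norm u + l2norm v"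
    using l2norm_nonneg power2_le_imp_le by (metis add_nonneg_nonneg)
qed

lemma l2_dom:
  assumes "v \<in> l2" "\<And>x. cmod (u x) \<le> cmod (v x)"
  shows "u \<in> l2" and "l2norm u \<le> l2norm v"
proof -
  have pt: "(cmod (u x))\<^sup>2 \<le> (cmod (v x))\<^sup>2" for x using assms(2)[of x] by (simp add: power_mono)
  show 1: "u \<in> l2" unfolding l2_iff
    by (rule summable_on_comparison_test[of "\<lambda>x. (cmod (v x))\<^sup>2"]) (use assms pt in \<open>auto simp: l2_iff\<close>)
  have "infsum (\<lambda>x. (cmod (u x))\<^sup>2) UNIV \<le> infsum (\<lambda>x. (cmod (v x))\<^sup>2) UNIV"
    by (rule infsum_mono) (use 1 assms pt in \<open>auto simp: l2_iff\<close>)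
  then show "l2norm u \<le> l2norm v" unfolding l2norm_def by simp
qed

lemma l2_scale:
  assumes "v \<in> l2"
  shows "(\<lambda>x. c * v x) \<in> l2" and "l2norm (\<lambda>x. c * v x) = cmod c * l2norm v"
proof -
  show "(\<lambda>x. c * v x) \<in> l2" using assms
    by (auto simp: l2_iff norm_mult power_mult_distrib intro: summable_on_cmult_right)
  have "infsum (\<lambda>x. (cmod (c * v x))\<^sup>2) UNIV = (cmod c)\<^sup>2 * infsum (\<lambda>x. (cmod (v x))\<^sup>2) UNIV"
    by (simp add: norm_mult power_mult_distrib infsum_cmult_right')
  then show "l2norm (\<lambda>x. c * v x) = cmod c * l2norm v"
    unfolding l2norm_def by (simp add: real_sqrt_mult)
qed

lemma l2_neg: "v \<in> l2 \<Longrightarrow> (\<lambda>x. - v x) \<in> l2 \<and> l2norm (\<lambda>x. - v x) = l2norm v"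
  by (simp add: l2_iff l2norm_def)

lemma l2_diff:
  assumes "u \<in> l2" "v \<in> l2"
  shows "vdiff u v \<in> l2" and "l2norm (vdiff u v) \<le> l2norm u + l2norm v"
  using l2_add[OF assms(1) l2_neg[OF assms(2), THEN conjunct1]] l2_neg[OF assms(2)]
  by (auto simp: vdiff_def)

lemma l2_coord: "v \<in> l2 \<Longrightarrow> cmod (v x) \<le> l2norm v"
proof -
  assume "v \<in> l2"
  have "sum (\<lambda>x. (cmod (v x))\<^sup>2) {x} \<le> infsum (\<lambda>x. (cmod (v x))\<^sup>2) UNIV"
    by (rule finite_sum_le_infsum) (use \<open>v \<in> l2\<close> in \<open>auto simp: l2_iff\<close>)
  then have "(cmod (v x))\<^sup>2 \<le> (l2norm v)\<^sup>2" by (simp add: l2norm_sq)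
  then show ?thesis by (rule power2_le_imp_le[OF _ l2norm_nonneg])
qed

definition delta :: "'x \<Rightarrow> 'x \<Rightarrow> complex" where
  "delta y = (\<lambda>x. if x = y then 1 else 0)"

lemma infsum_single_pt:
  assumes "\<And>x. x \<noteq> y \<Longrightarrow> f x = 0"
  shows "infsum f UNIV = (f y :: 'b::{topological_comm_monoid_add, t2_space})"
proof -
  have "infsum f UNIV = infsum f {y}"
    by (rule infsum_cong_neutral) (use assms in auto)
  then show ?thesis by simp
qed

lemma summable_single_pt:
  assumes "\<And>x. x \<noteq> y \<Longrightarrow> f x = 0"
  shows "f summable_on UNIV"
proof -
  have "f summable_on {y}" by simp
  then show ?thesis by (rule summable_on_cong_neutral[THEN iffD1, rotated -1]) (use assms in auto)
qed

lemma delta_l2: "delta y \<in> l2" and delta_norm: "l2norm (delta y) = 1"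
proof -
  show "delta y \<in> l2" unfolding l2_iff by (rule summable_single_pt[where y=y]) (auto simp: delta_def)
  have "infsum (\<lambda>x. (cmod (delta y x))\<^sup>2) UNIV = 1"
    by (subst infsum_single_pt[where y=y]) (auto simp: delta_def)
  then show "l2norm (delta y) = 1" by (simp add: l2norm_def)
qed

lemma finsupp_l2:
  assumes "finite T" "\<And>x. x \<notin> T \<Longrightarrow> v x = 0" shows "v \<in> l2"
  unfolding l2_iff
  by (rule summable_on_cong_neutral[THEN iffD1, of _ T]) (use assms in auto)

lemma finsupp_infsum:
  assumes "finite T" "\<And>x. x \<notin> T \<Longrightarrow> f x = 0"
  shows "infsum f UNIV = (sum f T :: 'b::{topological_comm_monoid_add, t2_space})"
proof -
  have "infsum f UNIV = infsum f T" by (rule infsum_cong_neutral) (use assms in auto)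
  then show ?thesis using assms by simp
qed


lemma infsum_diff_gen:
  fixes f g :: "'a \<Rightarrow> 'b::{topological_ab_group_add, t2_space}"
  assumes "f summable_on A" "g summable_on A"
  shows "infsum (\<lambda>x. f x - g x) A = infsum f A - infsum g A"
    and "(\<lambda>x. f x - g x) summable_on A"
proof -
  have "(\<lambda>x. - g x) summable_on A" using assms(2) by (simp add: summable_on_uminus)
  then show "infsum (\<lambda>x. f x - g x) A = infsum f A - infsum g A"
    using infsum_add[OF assms(1), of "\<lambda>x. - g x"] infsum_uminus[of g A] by simp
  show "(\<lambda>x. f x - g x) summable_on A"
    using summable_on_add[OF assms(1) \<open>(\<lambda>x. - g x) summable_on A\<close>] by simp
qed

lemma infsum_sum_swap:
  fixes f :: "'a \<Rightarrow> 'c \<Rightarrow> 'b::{topological_comm_monoid_add, t2_space}"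
  assumes "finite T" "\<And>y. y \<in> T \<Longrightarrow> (\<lambda>x. f x y) summable_on A"
  shows "infsum (\<lambda>x. \<Sum>y\<in>T. f x y) A = (\<Sum>y\<in>T. infsum (\<lambda>x. f x y) A)
     \<and> (\<lambda>x. \<Sum>y\<in>T. f x y) summable_on A"
  using assms
proof (induction T rule: finite_induct)
  case empty then show ?case by simp
next
  case (insert y T)
  have s1: "(\<lambda>x. f x y) summable_on A" using insert by auto
  have IH: "infsum (\<lambda>x. \<Sum>y\<in>T. f x y) A = (\<Sum>y\<in>T. infsum (\<lambda>x. f x y) A)"
     "(\<lambda>x. \<Sum>y\<in>T. f x y) summable_on A" using insert by auto
  show ?case using insert(1,2) IH s1
    by (simp add: infsum_add summable_on_add)
qed

definition lmul :: "('x \<Rightarrow> complex) \<Rightarrow> 'x mat \<Rightarrow> 'x mat" where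
  "lmul d a = (\<lambda>x y. d x * a x y)"
definition rmul :: "'x mat \<Rightarrow> ('x \<Rightarrow> complex) \<Rightarrow> 'x mat" where
  "rmul a d = (\<lambda>x y. a x y * d y)"
definition dmat :: "('x \<Rightarrow> complex) \<Rightarrow> 'x mat" where
  "dmat d = (\<lambda>x y. if x = y then d x else 0)"
definition adj :: "'x mat \<Rightarrow> 'x mat" where
  "adj a = (\<lambda>x y. cnj (a y x))"
definition zmat :: "'x mat" where
  "zmat = (\<lambda>x y. 0)"

lemma bounded_summ: "bounded_op a \<Longrightarrow> v \<in> l2 \<Longrightarrow> (\<lambda>y. a x y * v y) summable_on UNIV"
  by (auto simp: bounded_op_def)

lemma bounded_l2: "bounded_op a \<Longrightarrow> v \<in> l2 \<Longrightarrow> mapply a v \<in> l2"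
  by (auto simp: bounded_op_def)

lemma zero_l2: "(\<lambda>x. 0) \<in> l2" and zero_norm: "l2norm (\<lambda>x. 0) = 0"
  by (auto simp: l2_iff l2norm_def)

lemma mapply_zero: "mapply a (\<lambda>x. 0) = (\<lambda>x. 0)"
  by (simp add: mapply_def)

lemma mapply_scale: "mapply a (\<lambda>x. c * v x) = (\<lambda>x. c * mapply a v x)"
  unfolding mapply_def
  by (simp add: mult.left_commute infsum_cmult_right')

lemma opnorm_set_bdd:
  assumes "bounded_op a"
  shows "bdd_above {l2norm (mapply a v) | v. v \<in> l2 \<and> l2norm v \<le> 1}"
proof -
  obtain C where C: "\<forall>v\<in>l2. mapply a v \<in> l2 \<and> l2norm (mapply a v) \<le> C * l2norm v"
    using assms by (auto simp: bounded_op_def)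
  show ?thesis
  proof (rule bdd_aboveI[where M="\<bar>C\<bar>"])
    fix r assume "r \<in> {l2norm (mapply a v) | v. v \<in> l2 \<and> l2norm v \<le> 1}"
    then obtain v where "v \<in> l2 \<and> l2norm v \<le> 1" and rv: "r = l2norm (mapply a v)" by auto
    then have "l2norm (mapply a v) \<le> C * l2norm v" "l2norm v \<le> 1" "0 \<le> l2norm v"
      using C l2norm_nonneg by auto
    show "r \<le> \<bar>C\<bar>"
    proof (cases "C \<ge> 0")
      case True
      then have "C * l2norm v \<le> C * 1" using mult_left_mono[OF \<open>l2norm v \<le> 1\<close> True] by simp
      then show ?thesis using \<open>l2norm (mapply a v) \<le> C * l2norm v\<close> True rv by simp
    next
      case False
      then have "C * l2norm v \<le> 0" using \<open>0 \<le> l2norm v\<close> by (simp add: mult_nonpos_nonneg)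
      then show ?thesis using \<open>l2norm (mapply a v) \<le> C * l2norm v\<close> rv by simp
    qed
  qed
qed

lemma opnorm_upper:
  assumes "bounded_op a" "v \<in> l2" "l2norm v \<le> 1"
  shows "l2norm (mapply a v) \<le> opnorm a"
  unfolding opnorm_def
  by (rule cSup_upper[OF _ opnorm_set_bdd[OF assms(1)]]) (use assms in auto)

lemma opnorm_nonneg: "bounded_op a \<Longrightarrow> opnorm a \<ge> 0"
proof -
  assume b: "bounded_op a"
  have "l2norm (mapply a (\<lambda>x. 0)) \<le> opnorm a" by (rule opnorm_upper[OF b]) (simp_all add: zero_l2 zero_norm)
  then show ?thesis by (simp add: mapply_zero zero_norm)
qed

lemma opnorm_bound:
  assumes "bounded_op a" "v \<in> l2"
  shows "l2norm (mapply a v) \<le> opnorm a * l2norm v"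
proof (cases "l2norm v = 0")
  case True
  then have "v = (\<lambda>x. 0)" using l2_zero_if_norm0[OF assms(2)] by auto
  then show ?thesis by (simp add: mapply_zero zero_norm True)
next
  case False
  define n where "n = l2norm v"
  have np: "n > 0" using False l2norm_nonneg n_def by (metis less_eq_real_def)
  define w where "w = (\<lambda>x. complex_of_real (1/n) * v x)"
  have wl2: "w \<in> l2" and wn: "l2norm w = 1/n * n"
    using l2_scale[OF assms(2), of "complex_of_real (1/n)"] np unfolding w_def n_def[symmetric]
    by (auto simp only: norm_of_real abs_of_pos[of "1/n"] np) (use np in simp_all)
  have "l2norm (mapply a w) \<le> opnorm a" using opnorm_upper[OF assms(1) wl2] wn np by simp
  moreover have "l2norm (mapply a w) = 1/n * l2norm (mapply a v)"
    unfolding w_def mapply_scale using l2_scale[OF bounded_l2[OF assms], of "complex_of_real (1/n)"] np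
    by (simp add: norm_divide)
  ultimately have "1/n * l2norm (mapply a v) \<le> opnorm a" by simp
  then show ?thesis using np unfolding n_def[symmetric] by (simp add: field_simps)
qed

lemma opnorm_le:
  assumes "bounded_op a" "C \<ge> 0" "\<And>v. v \<in> l2 \<Longrightarrow> l2norm (mapply a v) \<le> C * l2norm v"
  shows "opnorm a \<le> C"
  unfolding opnorm_def
proof (rule cSup_least)
  show "{l2norm (mapply a v) |v. v \<in> l2 \<and> l2norm v \<le> 1} \<noteq> {}"
  proof -
    have "\<exists>v. l2norm (mapply a (\<lambda>x. 0)) = l2norm (mapply a v) \<and> v \<in> l2 \<and> l2norm v \<le> 1"
      by (rule exI[of _ "\<lambda>x. 0"]) (simp add: zero_l2 zero_norm)
    then have "l2norm (mapply a (\<lambda>x. 0)) \<in> {l2norm (mapply a v) |v. v \<in> l2 \<and> l2norm v \<le> 1}"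
      by simp
    then show ?thesis by blast
  qed
  fix r assume "r \<in> {l2norm (mapply a v) |v. v \<in> l2 \<and> l2norm v \<le> 1}"
  then obtain v where "v \<in> l2" "l2norm v \<le> 1" "r = l2norm (mapply a v)" by auto
  then show "r \<le> C" using assms(3)[of v] assms(2) mult_left_mono[of "l2norm v" 1 C] by simp
qed

lemma bounded_opI:
  assumes "\<And>v x. v \<in> l2 \<Longrightarrow> (\<lambda>y. a x y * v y) summable_on UNIV"
    and "\<And>v. v \<in> l2 \<Longrightarrow> mapply a v \<in> l2"
    and "\<And>v. v \<in> l2 \<Longrightarrow> l2norm (mapply a v) \<le> C * l2norm v"
  shows "bounded_op a"
  using assms unfolding bounded_op_def by blast

lemma mapply_delta: "mapply a (delta y) = (\<lambda>x. a x y)"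
  unfolding mapply_def by (rule ext, subst infsum_single_pt[where y=y]) (auto simp: delta_def)

lemma column_l2: "bounded_op a \<Longrightarrow> (\<lambda>x. a x y) \<in> l2 \<and> l2norm (\<lambda>x. a x y) \<le> opnorm a"
  using bounded_l2[OF _ delta_l2, of a y] opnorm_bound[OF _ delta_l2, of a y]
  by (simp add: mapply_delta delta_norm)

lemma entry_bound: "bounded_op a \<Longrightarrow> cmod (a x y) \<le> opnorm a"
  using column_l2[of a y] l2_coord[of "\<lambda>x. a x y" x] by auto

lemma mapply_madd:
  assumes "bounded_op a" "bounded_op b" "v \<in> l2"
  shows "mapply (madd a b) v = (\<lambda>x. mapply a v x + mapply b v x)"
  unfolding mapply_def madd_def
  using infsum_add[OF bounded_summ[OF assms(1,3)] bounded_summ[OF assms(2,3)]]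
  by (simp add: distrib_right)

lemma bounded_madd:
  assumes "bounded_op a" "bounded_op b"
  shows "bounded_op (madd a b)" and "opnorm (madd a b) \<le> opnorm a + opnorm b"
proof -
  have s: "(\<lambda>y. madd a b x y * v y) summable_on UNIV" if "v \<in> l2" for v x
    using summable_on_add[OF bounded_summ[OF assms(1) that] bounded_summ[OF assms(2) that]]
    by (simp add: madd_def distrib_right)
  have n: "mapply (madd a b) v \<in> l2 \<and> l2norm (mapply (madd a b) v) \<le> (opnorm a + opnorm b) * l2norm v"
    if "v \<in> l2" for v
  proof -
    have e: "mapply (madd a b) v = (\<lambda>x. mapply a v x + mapply b v x)"
      by (rule mapply_madd[OF assms that])
    note ad = l2_add[OF bounded_l2[OF assms(1) that] bounded_l2[OF assms(2) that]]
    show ?thesis unfolding e using ad opnorm_bound[OF assms(1) that] opnorm_bound[OF assms(2) that]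
      by (auto simp: distrib_right)
  qed
  show b: "bounded_op (madd a b)" by (rule bounded_opI[OF s]) (use n in auto)
  show "opnorm (madd a b) \<le> opnorm a + opnorm b"
    by (rule opnorm_le[OF b]) (use n opnorm_nonneg[OF assms(1)] opnorm_nonneg[OF assms(2)] in auto)
qed

lemma mapply_mscale:
  shows "mapply (mscale c a) v = (\<lambda>x. c * mapply a v x)"
  unfolding mapply_def mscale_def by (simp add: mult.assoc infsum_cmult_right')

lemma bounded_mscale:
  assumes "bounded_op a"
  shows "bounded_op (mscale c a)" and "opnorm (mscale c a) \<le> cmod c * opnorm a"
proof -
  have s: "(\<lambda>y. mscale c a x y * v y) summable_on UNIV" if "v \<in> l2" for v x
    using summable_on_cmult_right[OF bounded_summ[OF assms that], of c]
    by (simp add: mscale_def mult.assoc)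
  have n: "mapply (mscale c a) v \<in> l2 \<and> l2norm (mapply (mscale c a) v) \<le> (cmod c * opnorm a) * l2norm v"
    if "v \<in> l2" for v
    unfolding mapply_mscale using l2_scale[OF bounded_l2[OF assms that], of c]
      opnorm_bound[OF assms that]
    by (auto simp: mult.assoc intro: mult_left_mono)
  show b: "bounded_op (mscale c a)" by (rule bounded_opI[OF s]) (use n in auto)
  show "opnorm (mscale c a) \<le> cmod c * opnorm a"
    by (rule opnorm_le[OF b]) (use n opnorm_nonneg[OF assms(1)] in auto)
qed

lemma msub_eq: "msub a b = madd a (mscale (-1) b)"
  by (auto simp: msub_def madd_def mscale_def)

lemma bounded_msub:
  assumes "bounded_op a" "bounded_op b"
  shows "bounded_op (msub a b)" and "opnorm (msub a b) \<le> opnorm a + opnorm b"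
  using bounded_madd[OF assms(1) bounded_mscale(1)[OF assms(2)], of "-1"]
    bounded_mscale(2)[OF assms(2), of "-1"]
  unfolding msub_eq by auto

lemma mapply_msub:
  assumes "bounded_op a" "bounded_op b" "v \<in> l2"
  shows "mapply (msub a b) v = vdiff (mapply a v) (mapply b v)"
  unfolding msub_eq using mapply_madd[OF assms(1) bounded_mscale(1)[OF assms(2)] assms(3)]
  by (simp add: mapply_mscale vdiff_def)

lemma zmat_bounded: "bounded_op (zmat :: 'x mat)" and zmat_norm: "opnorm (zmat :: 'x mat) = 0"
proof -
  have m: "mapply zmat v = (\<lambda>x. 0)" for v :: "'x \<Rightarrow> complex" by (simp add: mapply_def zmat_def)
  show b: "bounded_op (zmat :: 'x mat)"
    apply (rule bounded_opI[where C=0])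
      apply (simp add: zmat_def)
     apply (simp_all add: m zero_l2 zero_norm)
    done
  show "opnorm (zmat :: 'x mat) = 0"
    using opnorm_le[OF b, of 0] opnorm_nonneg[OF b] by (simp add: m zero_norm)
qed

lemma mapply_lmul: "mapply (lmul d a) v = (\<lambda>x. d x * mapply a v x)"
  unfolding mapply_def lmul_def by (simp add: mult.assoc infsum_cmult_right')

lemma mapply_rmul: "mapply (rmul a d) v = mapply a (\<lambda>y. d y * v y)"
  unfolding mapply_def rmul_def by (simp add: mult.assoc mult.commute mult.left_commute)

lemma bounded_lmul:
  assumes "bounded_op a" "\<And>x. cmod (d x) \<le> 1"
  shows "bounded_op (lmul d a)" and "opnorm (lmul d a) \<le> opnorm a"
proof -
  have s: "(\<lambda>y. lmul d a x y * v y) summable_on UNIV" if "v \<in> l2" for v x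
    using summable_on_cmult_right[OF bounded_summ[OF assms(1) that], of "d x"]
    by (simp add: lmul_def mult.assoc)
  have n: "mapply (lmul d a) v \<in> l2 \<and> l2norm (mapply (lmul d a) v) \<le> opnorm a * l2norm v"
    if "v \<in> l2" for v
  proof -
    have "cmod (d x * mapply a v x) \<le> cmod (mapply a v x)" for x
      using assms(2)[of x] by (simp add: norm_mult mult_left_le_one_le)
    then have "(\<lambda>x. d x * mapply a v x) \<in> l2" "l2norm (\<lambda>x. d x * mapply a v x) \<le> l2norm (mapply a v)"
      using l2_dom[OF bounded_l2[OF assms(1) that], of "\<lambda>x. d x * mapply a v x"] by auto
    then show ?thesis unfolding mapply_lmul
      using opnorm_bound[OF assms(1) that] by linarith
  qed
  show b: "bounded_op (lmul d a)" by (rule bounded_opI[OF s]) (use n in auto)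
  show "opnorm (lmul d a) \<le> opnorm a"
    by (rule opnorm_le[OF b]) (use n opnorm_nonneg[OF assms(1)] in auto)
qed

lemma dvec_l2:
  assumes "v \<in> l2" "\<And>x. cmod (d x) \<le> 1"
  shows "(\<lambda>y. d y * v y) \<in> l2" and "l2norm (\<lambda>y. d y * v y) \<le> l2norm v"
proof -
  have "cmod (d x * v x) \<le> cmod (v x)" for x
    using assms(2)[of x] by (simp add: norm_mult mult_left_le_one_le)
  then show "(\<lambda>y. d y * v y) \<in> l2" and "l2norm (\<lambda>y. d y * v y) \<le> l2norm v"
    using l2_dom[OF assms(1)] by auto
qed

lemma bounded_rmul:
  assumes "bounded_op a" "\<And>x. cmod (d x) \<le> 1"
  shows "bounded_op (rmul a d)" and "opnorm (rmul a d) \<le> opnorm a"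
proof -
  have s: "(\<lambda>y. rmul a d x y * v y) summable_on UNIV" if "v \<in> l2" for v x
    using bounded_summ[OF assms(1) dvec_l2(1)[OF that assms(2)]]
    by (simp add: rmul_def mult.assoc)
  have n: "mapply (rmul a d) v \<in> l2 \<and> l2norm (mapply (rmul a d) v) \<le> opnorm a * l2norm v"
    if "v \<in> l2" for v
  proof -
    note w = dvec_l2[OF that assms(2)]
    have "l2norm (mapply a (\<lambda>y. d y * v y)) \<le> opnorm a * l2norm (\<lambda>y. d y * v y)"
      by (rule opnorm_bound[OF assms(1) w(1)])
    also have "\<dots> \<le> opnorm a * l2norm v" using w(2) opnorm_nonneg[OF assms(1)] by (rule mult_left_mono)
    finally show ?thesis unfolding mapply_rmul using bounded_l2[OF assms(1) w(1)] by auto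
  qed
  show b: "bounded_op (rmul a d)" by (rule bounded_opI[OF s]) (use n in auto)
  show "opnorm (rmul a d) \<le> opnorm a"
    by (rule opnorm_le[OF b]) (use n opnorm_nonneg[OF assms(1)] in auto)
qed

lemma mmult_dmat_right: "mmult c (dmat d) = rmul c d"
  unfolding mmult_def dmat_def rmul_def
  by (intro ext, subst infsum_single_pt) auto

lemma mmult_dmat_left: "mmult (dmat d) c = lmul d c"
  unfolding mmult_def dmat_def lmul_def
  by (intro ext, subst infsum_single_pt) auto

lemma mapply_dmat: "mapply (dmat d) v = (\<lambda>x. d x * v x)"
  unfolding mapply_def dmat_def
  by (intro ext, subst infsum_single_pt) auto

lemma bounded_dmat:
  assumes "\<And>x. cmod (d x) \<le> 1"
  shows "bounded_op (dmat d)" and "opnorm (dmat d) \<le> 1"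
proof -
  have s: "(\<lambda>y. dmat d x y * v y) summable_on UNIV" for v x
    by (rule summable_single_pt[where y=x]) (auto simp: dmat_def)
  have n: "mapply (dmat d) v \<in> l2 \<and> l2norm (mapply (dmat d) v) \<le> 1 * l2norm v"
    if "v \<in> l2" for v
    unfolding mapply_dmat using dvec_l2[OF that assms] by simp
  show b: "bounded_op (dmat d)" by (rule bounded_opI[OF s, where C=1]) (use n in auto)
  show "opnorm (dmat d) \<le> 1"
    by (rule opnorm_le[OF b]) (use n in auto)
qed


lemma adj_adj[simp]: "adj (adj a) = a"
  by (simp add: adj_def)

lemma adj_summ:
  assumes "bounded_op a" "v \<in> l2"
  shows "(\<lambda>y. adj a x y * v y) summable_on UNIV"
  unfolding adj_def using l2_prod_summable[OF l2_cnj[OF column_l2[OF assms(1), THEN conjunct1]] assms(2)] .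

lemma l2inner_cnj: "l2inner u v = cnj (l2inner v u)"
  unfolding l2inner_def by (simp flip: infsum_cnj add: mult.commute)

lemma infsum_of_real_gen:
  "infsum (\<lambda>x. complex_of_real (f x)) A = complex_of_real (infsum f A)"
proof (cases "f summable_on A")
  case True
  then show ?thesis by (intro infsumI has_sum_of_real) simp
next
  case False
  then have "\<not> (\<lambda>x. complex_of_real (f x)) summable_on A"
    using summable_on_Re[of "\<lambda>x. complex_of_real (f x)" A] by auto
  then show ?thesis using False by (simp add: infsum_not_exists)
qed

lemma l2inner_self: "l2inner v v = complex_of_real ((l2norm v)\<^sup>2)"
proof -
  have "l2inner v v = infsum (\<lambda>x. complex_of_real ((cmod (v x))\<^sup>2)) UNIV"
    unfolding l2inner_def by (simp only: complex_norm_square[symmetric])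
  also have "\<dots> = complex_of_real (infsum (\<lambda>x. (cmod (v x))\<^sup>2) UNIV)"
    by (rule infsum_of_real_gen)
  finally show ?thesis by (simp add: l2norm_sq)
qed

lemma adj_inner_fin:
  assumes a: "bounded_op a" and v: "v \<in> l2" and T: "finite T" and w: "\<And>x. x \<notin> T \<Longrightarrow> w x = 0"
  shows "l2inner (mapply a w) v = l2inner w (mapply (adj a) v)"
proof -
  have mw: "mapply a w x = (\<Sum>y\<in>T. a x y * w y)" for x
    unfolding mapply_def by (rule finsupp_infsum[OF T]) (use w in auto)
  have sc: "(\<lambda>x. a x y * cnj (v x)) summable_on UNIV" for y
    using l2_prod_summable[OF column_l2[OF a, THEN conjunct1] l2_cnj[OF v]] .
  have "l2inner (mapply a w) v = infsum (\<lambda>x. \<Sum>y\<in>T. w y * (a x y * cnj (v x))) UNIV"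
    unfolding l2inner_def mw by (simp add: sum_distrib_left sum_distrib_right mult_ac)
  also have "\<dots> = (\<Sum>y\<in>T. infsum (\<lambda>x. w y * (a x y * cnj (v x))) UNIV)"
  proof -
    have "(\<lambda>x. w y * (a x y * cnj (v x))) summable_on UNIV" for y
      by (rule summable_on_cmult_right[OF sc])
    then show ?thesis
      using infsum_sum_swap[OF T, where f="\<lambda>x y. w y * (a x y * cnj (v x))" and A=UNIV] by blast
  qed
  also have "\<dots> = (\<Sum>y\<in>T. w y * infsum (\<lambda>x. a x y * cnj (v x)) UNIV)"
    by (simp add: infsum_cmult_right')
  also have "\<dots> = (\<Sum>y\<in>T. w y * cnj (mapply (adj a) v y))"
  proof (rule sum.cong[OF refl])
    fix y
    have "cnj (mapply (adj a) v y) = infsum (\<lambda>x. cnj (cnj (a x y) * v x)) UNIV"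
      unfolding mapply_def adj_def by (simp only: infsum_cnj)
    then show "w y * infsum (\<lambda>x. a x y * cnj (v x)) UNIV = w y * cnj (mapply (adj a) v y)"
      by simp
  qed
  also have "\<dots> = l2inner w (mapply (adj a) v)"
    unfolding l2inner_def by (rule finsupp_infsum[OF T, symmetric]) (use w in auto)
  finally show ?thesis .
qed

definition trunc :: "'x set \<Rightarrow> ('x \<Rightarrow> complex) \<Rightarrow> ('x \<Rightarrow> complex)" where
  "trunc T v = (\<lambda>x. if x \<in> T then v x else 0)"

lemma trunc_l2: "finite T \<Longrightarrow> trunc T v \<in> l2"
  by (rule finsupp_l2[of T]) (auto simp: trunc_def)

lemma trunc_sq: "finite T \<Longrightarrow> (l2norm (trunc T v))\<^sup>2 = (\<Sum>x\<in>T. (cmod (v x))\<^sup>2)"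
  unfolding l2norm_sq by (subst finsupp_infsum[of T]) (auto simp: trunc_def)

lemma bounded_adj:
  assumes a: "bounded_op a"
  shows "bounded_op (adj a)" and "opnorm (adj a) \<le> opnorm a"
proof -
  have n: "mapply (adj a) v \<in> l2 \<and> l2norm (mapply (adj a) v) \<le> opnorm a * l2norm v" if v: "v \<in> l2" for v
  proof -
    define u where "u = mapply (adj a) v"
    define K where "K = opnorm a * l2norm v"
    have K0: "K \<ge> 0" unfolding K_def by (rule mult_nonneg_nonneg[OF opnorm_nonneg[OF a] l2norm_nonneg])
    have fin: "(\<Sum>x\<in>T. (cmod (u x))\<^sup>2) \<le> K\<^sup>2" if T: "finite T" for T
    proof -
      define s where "s = (\<Sum>x\<in>T. (cmod (u x))\<^sup>2)"
      have s0: "s \<ge> 0" unfolding s_def by (simp add: sum_nonneg)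
      have ns: "l2norm (trunc T u) = sqrt s" using trunc_sq[OF T, of u] l2norm_nonneg[of "trunc T u"]
        unfolding s_def by (metis real_sqrt_unique)
      have "l2inner (trunc T u) u = complex_of_real s"
      proof -
        have "l2inner (trunc T u) u = (\<Sum>x\<in>T. trunc T u x * cnj (u x))"
          unfolding l2inner_def by (rule finsupp_infsum[OF T]) (auto simp: trunc_def)
        also have "\<dots> = (\<Sum>x\<in>T. complex_of_real ((cmod (u x))\<^sup>2))"
          by (rule sum.cong) (auto simp: trunc_def complex_norm_square[symmetric])
        finally show ?thesis unfolding s_def by simp
      qed
      moreover have "l2inner (trunc T u) u = l2inner (mapply a (trunc T u)) v"
        unfolding u_def by (rule adj_inner_fin[OF a v T, symmetric]) (auto simp: trunc_def)
      ultimately have "s = cmod (l2inner (mapply a (trunc T u)) v)" using s0 by (metis norm_of_real abs_of_nonneg)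
      also have "\<dots> \<le> l2norm (mapply a (trunc T u)) * l2norm v"
        by (rule cs_inner[OF bounded_l2[OF a trunc_l2[OF T]] v])
      also have "\<dots> \<le> opnorm a * l2norm (trunc T u) * l2norm v"
        by (rule mult_right_mono[OF opnorm_bound[OF a trunc_l2[OF T]] l2norm_nonneg])
      also have "\<dots> = K * sqrt s" unfolding K_def ns by simp
      finally have "s \<le> K * sqrt s" .
      moreover have "sqrt s * sqrt s = s" using s0 by simp
      ultimately have ss: "sqrt s * sqrt s \<le> K * sqrt s" by simp
      have "sqrt s \<le> K"
      proof (cases "sqrt s = 0")
        case True then show ?thesis using K0 by simp
      next
        case False
        then have "sqrt s > 0" using s0 by simp
        then show ?thesis using mult_right_le_imp_le[OF ss] by simp
      qed
      then have "(sqrt s)\<^sup>2 \<le> K\<^sup>2" by (rule power_mono) (simp add: s0)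
      then show ?thesis using s0 unfolding s_def by simp
    qed
    have sm: "(\<lambda>x. (cmod (u x))\<^sup>2) summable_on UNIV"
      by (rule nonneg_bdd_above_summable_on) (use fin in \<open>auto intro!: bdd_aboveI\<close>)
    have "infsum (\<lambda>x. (cmod (u x))\<^sup>2) UNIV \<le> K\<^sup>2"
      by (rule infsum_le_finite_sums[OF sm]) (use fin in auto)
    then have "(l2norm u)\<^sup>2 \<le> K\<^sup>2" by (simp add: l2norm_sq)
    then have "l2norm u \<le> K" using K0 by (rule power2_le_imp_le)
    then show ?thesis using sm unfolding u_def K_def l2_iff by simp
  qed
  show b: "bounded_op (adj a)"
    by (rule bounded_opI[OF adj_summ[OF a]]) (use n in auto)
  show "opnorm (adj a) \<le> opnorm a"
    by (rule opnorm_le[OF b]) (use n opnorm_nonneg[OF a] in auto)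
qed

lemma row_l2:
  assumes "bounded_op a"
  shows "(\<lambda>y. a x y) \<in> l2" and "l2norm (\<lambda>y. a x y) \<le> opnorm a"
proof -
  have c: "(\<lambda>y. adj a y x) \<in> l2 \<and> l2norm (\<lambda>y. adj a y x) \<le> opnorm (adj a)"
    by (rule column_l2[OF bounded_adj(1)[OF assms]])
  have e: "(\<lambda>y. a x y) = (\<lambda>y. cnj (adj a y x))" by (simp add: adj_def)
  show "(\<lambda>y. a x y) \<in> l2" unfolding e using l2_cnj c by blast
  show "l2norm (\<lambda>y. a x y) \<le> opnorm a" unfolding e l2norm_cnj
    using c bounded_adj(2)[OF assms] by linarith
qed

lemma mapply_vdiff:
  assumes "bounded_op a" "u \<in> l2" "v \<in> l2"
  shows "mapply a (vdiff u v) = vdiff (mapply a u) (mapply a v)"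
  unfolding mapply_def vdiff_def
  using infsum_diff_gen(1)[OF bounded_summ[OF assms(1,2)] bounded_summ[OF assms(1,3)]]
  by (simp add: right_diff_distrib)

lemma l2inner_vdiff_left:
  assumes "u \<in> l2" "u' \<in> l2" "v \<in> l2"
  shows "l2inner (vdiff u u') v = l2inner u v - l2inner u' v"
  unfolding l2inner_def vdiff_def
  using infsum_diff_gen(1)[OF l2_prod_summable[OF assms(1) l2_cnj[OF assms(3)]]
      l2_prod_summable[OF assms(2) l2_cnj[OF assms(3)]]]
  by (simp add: left_diff_distrib)

lemma vdiff_sym: "l2norm (vdiff u v) = l2norm (vdiff v u)"
  unfolding l2norm_def vdiff_def by (simp add: norm_minus_commute)

lemma trunc_tendsto:
  assumes v: "v \<in> l2"
  shows "((\<lambda>T. l2norm (vdiff v (trunc T v))) \<longlongrightarrow> 0) (finite_subsets_at_top UNIV)"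
proof -
  define f where "f = (\<lambda>x. (cmod (v x))\<^sup>2)"
  have hs: "(f has_sum infsum f UNIV) UNIV" using v unfolding f_def l2_iff by simp
  then have lim: "((\<lambda>T. sum f T) \<longlongrightarrow> infsum f UNIV) (finite_subsets_at_top UNIV)"
    unfolding has_sum_def .
  have eq: "l2norm (vdiff v (trunc T v)) = sqrt (infsum f UNIV - sum f T)" if T: "finite T" for T
  proof -
    have "(\<lambda>x. (cmod (vdiff v (trunc T v) x))\<^sup>2) = (\<lambda>x. f x - (if x \<in> T then f x else 0))"
      by (auto simp: vdiff_def trunc_def f_def)
    moreover have "infsum (\<lambda>x. f x - (if x \<in> T then f x else 0)) UNIV = infsum f UNIV - sum f T"
    proof -
      have s2: "(\<lambda>x. if x \<in> T then f x else 0) summable_on UNIV"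
        by (rule summable_on_cong_neutral[THEN iffD1, of _ T]) (use T in auto)
      have "infsum (\<lambda>x. if x \<in> T then f x else 0) UNIV = sum f T"
        by (subst finsupp_infsum[OF T]) auto
      then show ?thesis using infsum_diff_gen(1)[OF has_sum_imp_summable[OF hs] s2] by simp
    qed
    ultimately show ?thesis unfolding l2norm_def by simp
  qed
  have "((\<lambda>T. sqrt (infsum f UNIV - sum f T)) \<longlongrightarrow> sqrt (infsum f UNIV - infsum f UNIV)) (finite_subsets_at_top UNIV)"
    by (intro tendsto_intros lim)
  then have "((\<lambda>T. sqrt (infsum f UNIV - sum f T)) \<longlongrightarrow> 0) (finite_subsets_at_top UNIV)" by simp
  then show ?thesis
    by (rule Lim_transform_eventually) (auto simp: eventually_finite_subsets_at_top eq intro!: exI[of _ "{}"])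
qed

lemma adj_inner:
  assumes a: "bounded_op a" and v: "v \<in> l2" and w: "w \<in> l2"
  shows "l2inner (mapply a v) w = l2inner v (mapply (adj a) w)"
proof -
  define F where "F = finite_subsets_at_top (UNIV :: 'a set)"
  define g where "g = (\<lambda>T. l2norm (vdiff v (trunc T v)))"
  have g0: "(g \<longlongrightarrow> 0) F" unfolding g_def F_def by (rule trunc_tendsto[OF v])
  define u where "u = mapply (adj a) w"
  have u: "u \<in> l2" unfolding u_def by (rule bounded_l2[OF bounded_adj(1)[OF a] w])
  have L: "((\<lambda>T. l2inner (mapply a (trunc T v)) w) \<longlongrightarrow> l2inner (mapply a v) w) F"
  proof (rule LIM_zero_cancel, rule Lim_null_comparison)
    show "((\<lambda>T. opnorm a * g T * l2norm w) \<longlongrightarrow> 0) F"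
      using tendsto_mult[OF tendsto_mult[OF tendsto_const g0] tendsto_const, of "opnorm a" "l2norm w"] by simp
    show "\<forall>\<^sub>F T in F. norm (l2inner (mapply a (trunc T v)) w - l2inner (mapply a v) w) \<le> opnorm a * g T * l2norm w"
      unfolding F_def eventually_finite_subsets_at_top
    proof (intro exI[of _ "{}"] conjI allI impI; clarsimp)
      fix T :: "'a set" assume T: "finite T"
      note tl = trunc_l2[OF T, of v]
      have "l2inner (mapply a (trunc T v)) w - l2inner (mapply a v) w = l2inner (mapply a (vdiff (trunc T v) v)) w"
        by (simp add: mapply_vdiff[OF a tl v] l2inner_vdiff_left[OF bounded_l2[OF a tl] bounded_l2[OF a v] w])
      also have "cmod \<dots> \<le> l2norm (mapply a (vdiff (trunc T v) v)) * l2norm w"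
        by (rule cs_inner[OF bounded_l2[OF a l2_diff(1)[OF tl v]] w])
      also have "\<dots> \<le> opnorm a * l2norm (vdiff (trunc T v) v) * l2norm w"
        by (rule mult_right_mono[OF opnorm_bound[OF a l2_diff(1)[OF tl v]] l2norm_nonneg])
      finally show "cmod (l2inner (mapply a (trunc T v)) w - l2inner (mapply a v) w) \<le> opnorm a * g T * l2norm w"
        unfolding g_def by (simp add: vdiff_sym)
    qed
  qed
  have R: "((\<lambda>T. l2inner (trunc T v) u) \<longlongrightarrow> l2inner v u) F"
  proof (rule LIM_zero_cancel, rule Lim_null_comparison)
    show "((\<lambda>T. g T * l2norm u) \<longlongrightarrow> 0) F"
      using tendsto_mult[OF g0 tendsto_const, of "l2norm u"] by simp
    show "\<forall>\<^sub>F T in F. norm (l2inner (trunc T v) u - l2inner v u) \<le> g T * l2norm u"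
      unfolding F_def eventually_finite_subsets_at_top
    proof (intro exI[of _ "{}"] conjI allI impI; clarsimp)
      fix T :: "'a set" assume T: "finite T"
      note tl = trunc_l2[OF T, of v]
      have "l2inner (trunc T v) u - l2inner v u = l2inner (vdiff (trunc T v) v) u"
        by (simp add: l2inner_vdiff_left[OF tl v u])
      also have "cmod \<dots> \<le> l2norm (vdiff (trunc T v) v) * l2norm u"
        by (rule cs_inner[OF l2_diff(1)[OF tl v] u])
      finally show "cmod (l2inner (trunc T v) u - l2inner v u) \<le> g T * l2norm u"
        unfolding g_def by (simp add: vdiff_sym)
    qed
  qed
  have eq: "l2inner (mapply a (trunc T v)) w = l2inner (trunc T v) u" if "finite T" for T
    unfolding u_def by (rule adj_inner_fin[OF a w that]) (auto simp: trunc_def)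
  have L': "((\<lambda>T. l2inner (trunc T v) u) \<longlongrightarrow> l2inner (mapply a v) w) F"
    using L by (rule Lim_transform_eventually)
       (auto simp: F_def eventually_finite_subsets_at_top eq intro!: exI[of _ "{}"])
  show ?thesis
    using tendsto_unique[OF _ L' R] unfolding F_def u_def by simp
qed

lemma selfadj_real:
  assumes "bounded_op s" "adj s = s" "v \<in> l2"
  shows "Im (l2inner (mapply s v) v) = 0"
proof -
  have "l2inner (mapply s v) v = l2inner v (mapply s v)"
    using adj_inner[OF assms(1,3,3)] assms(2) by simp
  also have "\<dots> = cnj (l2inner (mapply s v) v)" by (rule l2inner_cnj)
  finally show ?thesis by (metis cnj.simps(2) neg_equal_zero)
qed


lemma uroe_bounded: "a \<in> uroe \<Longrightarrow> bounded_op a"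
  by (simp add: uroe_def)

lemma uroe_approx: "a \<in> uroe \<Longrightarrow> e > 0 \<Longrightarrow> \<exists>b. bounded_op b \<and> finite_prop b \<and> opnorm (msub a b) < e"
  by (simp add: uroe_def)

lemma uroeI:
  assumes "bounded_op a" "\<And>e. e > 0 \<Longrightarrow> \<exists>b. bounded_op b \<and> finite_prop b \<and> opnorm (msub a b) < e"
  shows "a \<in> uroe"
  using assms by (simp add: uroe_def)

lemma finite_prop_madd: "finite_prop a \<Longrightarrow> finite_prop b \<Longrightarrow> finite_prop (madd a b)"
  unfolding finite_prop_def madd_def
proof (elim exE)
  fix r1 r2 assume r1: "\<forall>x y. a x y \<noteq> 0 \<longrightarrow> dist x y \<le> r1" and r2: "\<forall>x y. b x y \<noteq> 0 \<longrightarrow> dist x y \<le> r2"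
  show "\<exists>r. \<forall>x y. a x y + b x y \<noteq> 0 \<longrightarrow> dist x y \<le> r"
  proof (intro exI[of _ "max r1 r2"] allI impI)
    fix x y assume "a x y + b x y \<noteq> 0"
    then have "a x y \<noteq> 0 \<or> b x y \<noteq> 0" by auto
    then show "dist x y \<le> max r1 r2" using r1 r2 by (meson max.coboundedI1 max.coboundedI2)
  qed
qed

lemma finite_prop_mono:
  assumes "finite_prop a" "\<And>x y. b x y \<noteq> 0 \<Longrightarrow> a x y \<noteq> 0"
  shows "finite_prop b"
  using assms unfolding finite_prop_def by metis

lemma msub_madd: "msub (madd a1 a2) (madd b1 b2) = madd (msub a1 b1) (msub a2 b2)"
  by (auto simp: msub_def madd_def algebra_simps)

lemma uroe_madd:
  assumes "a1 \<in> uroe" "a2 \<in> uroe" shows "madd a1 a2 \<in> uroe"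
proof (rule uroeI)
  show "bounded_op (madd a1 a2)" using bounded_madd(1) uroe_bounded assms by blast
  fix e :: real assume e: "e > 0"
  obtain b1 where b1: "bounded_op b1" "finite_prop b1" "opnorm (msub a1 b1) < e/2"
    using uroe_approx[OF assms(1), of "e/2"] e by auto
  obtain b2 where b2: "bounded_op b2" "finite_prop b2" "opnorm (msub a2 b2) < e/2"
    using uroe_approx[OF assms(2), of "e/2"] e by auto
  have "opnorm (msub (madd a1 a2) (madd b1 b2)) \<le> opnorm (msub a1 b1) + opnorm (msub a2 b2)"
    unfolding msub_madd
    by (rule bounded_madd(2)) (auto intro: bounded_msub(1) uroe_bounded assms b1 b2)
  then show "\<exists>b. bounded_op b \<and> finite_prop b \<and> opnorm (msub (madd a1 a2) b) < e"
    using b1 b2 by (intro exI[of _ "madd b1 b2"]) (auto intro: bounded_madd finite_prop_madd)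
qed

lemma msub_mscale: "msub (mscale c a) (mscale c b) = mscale c (msub a b)"
  by (auto simp: msub_def mscale_def right_diff_distrib)

lemma uroe_mscale:
  assumes "a \<in> uroe" shows "mscale c a \<in> uroe"
proof (rule uroeI)
  show "bounded_op (mscale c a)" using bounded_mscale(1) uroe_bounded assms by blast
  fix e :: real assume e: "e > 0"
  define d where "d = e / (cmod c + 1)"
  have d: "d > 0" using e unfolding d_def by (simp add: add_nonneg_pos)
  obtain b where b: "bounded_op b" "finite_prop b" "opnorm (msub a b) < d"
    using uroe_approx[OF assms d] by auto
  have "opnorm (msub (mscale c a) (mscale c b)) \<le> cmod c * opnorm (msub a b)"
    unfolding msub_mscale by (rule bounded_mscale(2)[OF bounded_msub(1)[OF uroe_bounded[OF assms] b(1)]])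
  also have "\<dots> \<le> cmod c * d" using b(3) by (simp add: mult_left_mono)
  also have "\<dots> < e"
  proof -
    have "cmod c * d = e * (cmod c / (cmod c + 1))" unfolding d_def by (simp add: field_simps)
    also have "\<dots> < e * 1"
    proof (rule mult_strict_left_mono[OF _ e])
      have p: "cmod c + 1 > 0" using add_nonneg_pos[OF norm_ge_zero[of c], of 1] by simp
      then show "cmod c / (cmod c + 1) < 1" by (simp add: divide_less_eq)
    qed
    finally show ?thesis by simp
  qed
  finally show "\<exists>b. bounded_op b \<and> finite_prop b \<and> opnorm (msub (mscale c a) b) < e"
  proof (intro exI[of _ "mscale c b"] conjI)
    show "bounded_op (mscale c b)" by (rule bounded_mscale(1)[OF b(1)])
    show "finite_prop (mscale c b)" by (rule finite_prop_mono[OF b(2)]) (auto simp: mscale_def)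
  qed
qed

lemma uroe_msub: "a \<in> uroe \<Longrightarrow> b \<in> uroe \<Longrightarrow> msub a b \<in> uroe"
  unfolding msub_eq by (intro uroe_madd uroe_mscale)

lemma msub_adj: "msub (adj a) (adj b) = adj (msub a b)"
  by (auto simp: msub_def adj_def)

lemma uroe_adj:
  assumes "a \<in> uroe" shows "adj a \<in> uroe"
proof (rule uroeI)
  show "bounded_op (adj a)" using bounded_adj(1) uroe_bounded assms by blast
  fix e :: real assume e: "e > 0"
  obtain b where b: "bounded_op b" "finite_prop b" "opnorm (msub a b) < e"
    using uroe_approx[OF assms e] by auto
  have "opnorm (msub (adj a) (adj b)) \<le> opnorm (msub a b)"
    unfolding msub_adj by (rule bounded_adj(2)[OF bounded_msub(1)[OF uroe_bounded[OF assms] b(1)]])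
  moreover have "finite_prop (adj b)"
    using b(2) unfolding finite_prop_def adj_def by (metis complex_cnj_zero dist_commute)
  ultimately show "\<exists>b. bounded_op b \<and> finite_prop b \<and> opnorm (msub (adj a) b) < e"
    using b by (intro exI[of _ "adj b"]) (auto intro: bounded_adj)
qed

lemma msub_lmul: "msub (lmul d a) (lmul d b) = lmul d (msub a b)"
  by (auto simp: msub_def lmul_def right_diff_distrib)

lemma msub_rmul: "msub (rmul a d) (rmul b d) = rmul (msub a b) d"
  by (auto simp: msub_def rmul_def left_diff_distrib)

lemma uroe_lmul:
  assumes "a \<in> uroe" "\<And>x. cmod (d x) \<le> 1" shows "lmul d a \<in> uroe"
proof (rule uroeI)
  show "bounded_op (lmul d a)" using bounded_lmul(1) uroe_bounded assms by blast
  fix e :: real assume e: "e > 0"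
  obtain b where b: "bounded_op b" "finite_prop b" "opnorm (msub a b) < e"
    using uroe_approx[OF assms(1) e] by auto
  have "opnorm (msub (lmul d a) (lmul d b)) \<le> opnorm (msub a b)"
    unfolding msub_lmul by (rule bounded_lmul(2)[OF bounded_msub(1)[OF uroe_bounded[OF assms(1)] b(1)] assms(2)])
  moreover have "finite_prop (lmul d b)"
    by (rule finite_prop_mono[OF b(2)]) (auto simp: lmul_def)
  ultimately show "\<exists>b. bounded_op b \<and> finite_prop b \<and> opnorm (msub (lmul d a) b) < e"
    using b assms by (intro exI[of _ "lmul d b"]) (auto intro: bounded_lmul)
qed

lemma uroe_rmul:
  assumes "a \<in> uroe" "\<And>x. cmod (d x) \<le> 1" shows "rmul a d \<in> uroe"
proof (rule uroeI)
  show "bounded_op (rmul a d)" using bounded_rmul(1) uroe_bounded assms by blast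
  fix e :: real assume e: "e > 0"
  obtain b where b: "bounded_op b" "finite_prop b" "opnorm (msub a b) < e"
    using uroe_approx[OF assms(1) e] by auto
  have "opnorm (msub (rmul a d) (rmul b d)) \<le> opnorm (msub a b)"
    unfolding msub_rmul by (rule bounded_rmul(2)[OF bounded_msub(1)[OF uroe_bounded[OF assms(1)] b(1)] assms(2)])
  moreover have "finite_prop (rmul b d)"
    by (rule finite_prop_mono[OF b(2)]) (auto simp: rmul_def)
  ultimately show "\<exists>b. bounded_op b \<and> finite_prop b \<and> opnorm (msub (rmul a d) b) < e"
    using b assms by (intro exI[of _ "rmul b d"]) (auto intro: bounded_rmul)
qed

lemma msub_self: "msub a a = zmat"
  by (auto simp: msub_def zmat_def)

lemma uroe_fp:
  assumes "bounded_op a" "finite_prop a" shows "a \<in> uroe"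
  by (rule uroeI[OF assms(1)]) (use assms in \<open>auto intro!: exI[of _ a] simp: msub_self zmat_norm\<close>)

lemma uroe_dmat:
  assumes "\<And>x. cmod (d x) \<le> 1" shows "dmat d \<in> uroe"
  by (rule uroe_fp[OF bounded_dmat(1)[OF assms]]) (auto simp: finite_prop_def dmat_def intro!: exI[of _ 0])

lemma zmat_uroe: "zmat \<in> uroe"
  by (rule uroe_fp[OF zmat_bounded]) (auto simp: finite_prop_def zmat_def)

definition eunit :: "'x \<Rightarrow> 'x \<Rightarrow> 'x mat" where
  "eunit x y = (\<lambda>u v. if u = x \<and> v = y then 1 else 0)"

lemma ematrix_eunit: "ematrix x = eunit x x"
  by (simp add: ematrix_def eunit_def)

lemma ematrix_dmat: "ematrix x = dmat (delta x)"
  by (auto simp: ematrix_def dmat_def delta_def intro!: ext)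

lemma mapply_eunit: "mapply (eunit x y) v = (\<lambda>u. if u = x then v y else 0)"
  unfolding mapply_def eunit_def
  by (rule ext, subst infsum_single_pt[where y=y]) auto

lemma bounded_eunit: "bounded_op (eunit x y)" and opnorm_eunit: "opnorm (eunit x y) \<le> 1"
proof -
  have s: "(\<lambda>w. eunit x y u w * v w) summable_on UNIV" for v u
    by (rule summable_single_pt[where y=y]) (auto simp: eunit_def)
  have n: "mapply (eunit x y) v \<in> l2 \<and> l2norm (mapply (eunit x y) v) \<le> 1 * l2norm v" if v: "v \<in> l2" for v
  proof -
    have "cmod (mapply (eunit x y) v u) \<le> cmod (delta x u * v y)" for u
      by (auto simp: mapply_eunit delta_def)
    then have "mapply (eunit x y) v \<in> l2 \<and> l2norm (mapply (eunit x y) v) \<le> l2norm (\<lambda>u. v y * delta x u)"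
      using l2_dom[OF l2_scale(1)[OF delta_l2, of "v y" x]] by (simp add: mult.commute)
    moreover have "l2norm (\<lambda>u. v y * delta x u) = cmod (v y)"
      using l2_scale(2)[OF delta_l2, of "v y" x] delta_norm[of x] by simp
    ultimately show ?thesis using l2_coord[OF v, of y] by simp
  qed
  show b: "bounded_op (eunit x y)" by (rule bounded_opI[OF s, where C=1]) (use n in auto)
  show "opnorm (eunit x y) \<le> 1" by (rule opnorm_le[OF b]) (use n in auto)
qed

lemma uroe_eunit: "eunit x y \<in> uroe"
  by (rule uroe_fp[OF bounded_eunit]) (auto simp: finite_prop_def eunit_def intro!: exI[of _ "dist x y"])

lemma uroe_ematrix: "ematrix x \<in> uroe"
  unfolding ematrix_eunit by (rule uroe_eunit)

definition idm :: "'x mat" where "idm = dmat (\<lambda>_. 1)"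

lemma uroe_idm: "idm \<in> uroe"
  unfolding idm_def by (rule uroe_dmat) simp

lemma mapply_idm: "mapply idm v = v"
  unfolding idm_def mapply_dmat by simp

lemma bounded_idm: "bounded_op idm"
  unfolding idm_def by (rule bounded_dmat) simp


lemma phi_add: "pos_functional uroe \<phi> \<Longrightarrow> a \<in> uroe \<Longrightarrow> b \<in> uroe \<Longrightarrow> \<phi> (madd a b) = \<phi> a + \<phi> b"
  by (simp add: pos_functional_def lin_functional_def)

lemma phi_scale: "pos_functional uroe \<phi> \<Longrightarrow> a \<in> uroe \<Longrightarrow> \<phi> (mscale c a) = c * \<phi> a"
  by (simp add: pos_functional_def lin_functional_def)

lemma phi_sub: "pos_functional uroe \<phi> \<Longrightarrow> a \<in> uroe \<Longrightarrow> b \<in> uroe \<Longrightarrow> \<phi> (msub a b) = \<phi> a - \<phi> b"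
  unfolding msub_eq by (simp add: phi_add phi_scale uroe_mscale)

lemma phi_zmat: "pos_functional uroe \<phi> \<Longrightarrow> \<phi> zmat = 0"
proof -
  assume P: "pos_functional uroe \<phi>"
  have "zmat = mscale 0 (zmat :: 'a mat)" by (simp add: zmat_def mscale_def)
  then have "\<phi> zmat = \<phi> (mscale 0 (zmat :: 'a mat))" by simp
  also have "\<dots> = 0" using phi_scale[OF P zmat_uroe] by simp
  finally show ?thesis .
qed

lemma phi_pos: "pos_functional uroe \<phi> \<Longrightarrow> a \<in> uroe \<Longrightarrow> pos_op a \<Longrightarrow> Im (\<phi> a) = 0 \<and> Re (\<phi> a) \<ge> 0"
  by (simp add: pos_functional_def)

lemma exp_cancel: "exp (\<i> * c) * z * exp (- \<i> * c) = (z :: complex)"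
proof -
  have e: "exp (\<i> * c) * exp (- \<i> * c) = 1" by (simp add: exp_add[symmetric])
  have "exp (\<i> * c) * z * exp (- \<i> * c) = z * (exp (\<i> * c) * exp (- \<i> * c))" by (simp only: mult_ac)
  also have "\<dots> = z" by (simp only: e mult_1_right)
  finally show ?thesis .
qed

lemma sigma_dmat: "sigma h t (dmat d) = dmat d"
proof (intro ext)
  fix x y
  show "sigma h t (dmat d) x y = dmat d x y"
  proof (cases "x = y")
    case True
    then show ?thesis unfolding sigma_def dmat_def
      using exp_cancel[of "of_real t * of_real (h y)" "d y"] by (simp add: mult.assoc)
  qed (simp add: sigma_def dmat_def)
qed

lemma analytic_const_dmat:
  assumes "\<And>x. cmod (d x) \<le> 1"
  shows "analytic_ext uroe h (dmat d) (\<lambda>z. dmat d)"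
proof -
  have e: "msub (mscale (1 / (w - z)) (msub (dmat d) (dmat d))) zmat = zmat" for w z :: complex
    by (auto simp: msub_def mscale_def zmat_def)
  have "entire_op (\<lambda>z. dmat d)"
    unfolding entire_op_def
  proof
    fix z :: complex
    show "\<exists>D. bounded_op D \<and> ((\<lambda>w. opnorm (msub (mscale (1 / (w - z)) (msub (dmat d) (dmat d))) D)) \<longlongrightarrow> 0) (at z)"
      by (rule exI[of _ zmat], rule conjI[OF zmat_bounded]) (simp only: e zmat_norm tendsto_const)
  qed
  then show ?thesis unfolding analytic_ext_def using uroe_dmat[OF assms] by (simp add: sigma_dmat)
qed

lemma kms_diag:
  assumes K: "kms_condition uroe h \<beta> \<phi>" and c: "c \<in> uroe" and d: "\<And>x. cmod (d x) \<le> 1"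
  shows "\<phi> (rmul c d) = \<phi> (lmul d c)"
proof -
  have "\<phi> (mmult c ((\<lambda>z. dmat d) (\<i> * of_real \<beta>))) = \<phi> (mmult (dmat d) c)"
    using K[unfolded kms_condition_def, rule_format, OF c uroe_dmat[OF d] analytic_const_dmat[OF d]] .
  then show ?thesis by (simp only: mmult_dmat_right mmult_dmat_left)
qed

lemma l2inner_add_left:
  assumes "u \<in> l2" "u' \<in> l2" "v \<in> l2"
  shows "l2inner (\<lambda>x. u x + u' x) v = l2inner u v + l2inner u' v"
  unfolding l2inner_def
  using infsum_add[OF l2_prod_summable[OF assms(1) l2_cnj[OF assms(3)]]
      l2_prod_summable[OF assms(2) l2_cnj[OF assms(3)]]]
  by (simp add: distrib_right)

lemma l2inner_scale_left: "l2inner (\<lambda>x. c * u x) v = c * l2inner u v"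
  unfolding l2inner_def by (simp add: mult.assoc infsum_cmult_right')

lemma idm_pos: "pos_op idm"
  unfolding pos_op_def using bounded_idm by (simp add: mapply_idm l2inner_self)

lemma shift_pos:
  fixes s :: "'x mat"
  assumes s: "bounded_op s" "adj s = s" and k: "\<bar>k\<bar> \<le> 1"
  shows "pos_op (madd (mscale (complex_of_real (opnorm s)) idm) (mscale (complex_of_real k) s))"
proof -
  define r where "r = opnorm s"
  have r0: "r \<ge> 0" unfolding r_def by (rule opnorm_nonneg[OF s(1)])
  have b1: "bounded_op (mscale (complex_of_real r) idm)" by (rule bounded_mscale(1)[OF bounded_idm])
  have b2: "bounded_op (mscale (complex_of_real k) s)" by (rule bounded_mscale(1)[OF s(1)])
  have b: "bounded_op (madd (mscale (complex_of_real r) idm) (mscale (complex_of_real k) s))"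
    by (rule bounded_madd(1)[OF b1 b2])
  show ?thesis unfolding pos_op_def r_def[symmetric]
  proof (intro conjI b ballI)
    fix v :: "'x \<Rightarrow> complex" assume v: "v \<in> l2"
    have m: "mapply (madd (mscale (complex_of_real r) idm) (mscale (complex_of_real k) s)) v
        = (\<lambda>x. complex_of_real r * v x + complex_of_real k * mapply s v x)"
      by (simp add: mapply_madd[OF b1 b2 v] mapply_mscale mapply_idm)
    have sv: "mapply s v \<in> l2" by (rule bounded_l2[OF s(1) v])
    define z where "z = l2inner (mapply s v) v"
    have zr: "Im z = 0" unfolding z_def by (rule selfadj_real[OF s v])
    have "cmod z \<le> l2norm (mapply s v) * l2norm v" unfolding z_def by (rule cs_inner[OF sv v])
    also have "\<dots> \<le> r * l2norm v * l2norm v"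
      using mult_right_mono[OF opnorm_bound[OF s(1) v] l2norm_nonneg[of v]] unfolding r_def .
    finally have zb: "\<bar>Re z\<bar> \<le> r * (l2norm v)\<^sup>2" using abs_Re_le_cmod[of z] by (simp add: power2_eq_square)
    have "l2inner (\<lambda>x. complex_of_real r * v x + complex_of_real k * mapply s v x) v
        = complex_of_real r * complex_of_real ((l2norm v)\<^sup>2) + complex_of_real k * z"
      unfolding z_def
      by (simp add: l2inner_add_left[OF l2_scale(1)[OF v] l2_scale(1)[OF sv] v] l2inner_scale_left l2inner_self)
    moreover have "k * Re z \<ge> - (r * (l2norm v)\<^sup>2)"
    proof -
      have "\<bar>k * Re z\<bar> \<le> 1 * (r * (l2norm v)\<^sup>2)"
        unfolding abs_mult by (rule mult_mono[OF k zb]) (use r0 in auto)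
      then show ?thesis by linarith
    qed
    ultimately show "Im (l2inner (mapply (madd (mscale (complex_of_real r) idm) (mscale (complex_of_real k) s)) v) v) = 0"
      and "0 \<le> Re (l2inner (mapply (madd (mscale (complex_of_real r) idm) (mscale (complex_of_real k) s)) v) v)"
      unfolding m using zr by auto
  qed
qed

lemma selfadj_bound:
  assumes P: "pos_functional uroe \<phi>" and s: "s \<in> uroe" "adj s = s"
  shows "Im (\<phi> s) = 0" and "\<bar>Re (\<phi> s)\<bar> \<le> opnorm s * Re (\<phi> idm)"
proof -
  define r where "r = opnorm s"
  have sb: "bounded_op s" by (rule uroe_bounded[OF s(1)])
  have i: "Im (\<phi> idm) = 0" "Re (\<phi> idm) \<ge> 0" using phi_pos[OF P uroe_idm idm_pos] by auto
  have gen: "\<phi> (madd (mscale (complex_of_real (opnorm s)) idm) (mscale (complex_of_real k) s))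
        = complex_of_real (opnorm s) * \<phi> idm + complex_of_real k * \<phi> s" for k
    by (simp add: phi_add[OF P] phi_scale[OF P] uroe_mscale uroe_idm s(1))
  have pk: "Im (complex_of_real (opnorm s) * \<phi> idm + complex_of_real k * \<phi> s) = 0 \<and>
       Re (complex_of_real (opnorm s) * \<phi> idm + complex_of_real k * \<phi> s) \<ge> 0" if "\<bar>k\<bar> \<le> 1" for k
    using phi_pos[OF P uroe_madd[OF uroe_mscale[OF uroe_idm] uroe_mscale[OF s(1)]] shift_pos[OF sb s(2) that]]
    unfolding gen .
  from pk[of 1] pk[of "-1"] i show "Im (\<phi> s) = 0" and "\<bar>Re (\<phi> s)\<bar> \<le> opnorm s * Re (\<phi> idm)"
    unfolding r_def[symmetric] by auto
qed

lemma adj_mscale: "adj (mscale c a) = mscale (cnj c) (adj a)"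
  by (auto simp: adj_def mscale_def)

lemma phi_bound:
  assumes P: "pos_functional uroe \<phi>" and c: "c \<in> uroe"
  shows "cmod (\<phi> c) \<le> 2 * opnorm c * Re (\<phi> idm)"
proof -
  define s1 where "s1 = mscale (1/2) (madd c (adj c))"
  define s2 where "s2 = mscale (- \<i>/2) (msub c (adj c))"
  have cb: "bounded_op c" by (rule uroe_bounded[OF c])
  have u1: "s1 \<in> uroe" unfolding s1_def by (intro uroe_mscale uroe_madd c uroe_adj)
  have u2: "s2 \<in> uroe" unfolding s2_def by (intro uroe_mscale uroe_msub c uroe_adj)
  have a1: "adj s1 = s1" unfolding s1_def by (intro ext) (simp add: adj_def mscale_def madd_def add.commute)
  have a2: "adj s2 = s2" unfolding s2_def by (auto simp: adj_def mscale_def msub_def algebra_simps)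
  have ce: "c = madd s1 (mscale \<i> s2)"
    unfolding s1_def s2_def by (auto simp: adj_def mscale_def msub_def madd_def algebra_simps)
  have n1: "opnorm s1 \<le> opnorm c"
  proof -
    have "opnorm s1 \<le> cmod (1/2) * opnorm (madd c (adj c))"
      unfolding s1_def by (rule bounded_mscale(2)[OF bounded_madd(1)[OF cb bounded_adj(1)[OF cb]]])
    also have "\<dots> \<le> 1/2 * (opnorm c + opnorm c)"
      using bounded_madd(2)[OF cb bounded_adj(1)[OF cb]] bounded_adj(2)[OF cb] by simp
    finally show ?thesis by simp
  qed
  have n2: "opnorm s2 \<le> opnorm c"
  proof -
    have "opnorm s2 \<le> cmod (- \<i>/2) * opnorm (msub c (adj c))"
      unfolding s2_def by (rule bounded_mscale(2)[OF bounded_msub(1)[OF cb bounded_adj(1)[OF cb]]])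
    also have "\<dots> \<le> 1/2 * (opnorm c + opnorm c)"
      using bounded_msub(2)[OF cb bounded_adj(1)[OF cb]] bounded_adj(2)[OF cb] by (simp add: norm_divide)
    finally show ?thesis by simp
  qed
  have "\<phi> c = \<phi> s1 + \<i> * \<phi> s2"
    by (subst ce) (simp add: phi_add[OF P] phi_scale[OF P] u1 u2 uroe_mscale)
  then have "cmod (\<phi> c) \<le> cmod (\<phi> s1) + cmod (\<phi> s2)"
    using norm_triangle_ineq[of "\<phi> s1" "\<i> * \<phi> s2"] by (simp add: norm_mult)
  also have "cmod (\<phi> s1) = \<bar>Re (\<phi> s1)\<bar>" using selfadj_bound(1)[OF P u1 a1] by (simp add: cmod_eq_Re)
  also have "cmod (\<phi> s2) = \<bar>Re (\<phi> s2)\<bar>" using selfadj_bound(1)[OF P u2 a2] by (simp add: cmod_eq_Re)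
  also have "\<bar>Re (\<phi> s1)\<bar> + \<bar>Re (\<phi> s2)\<bar> \<le> opnorm s1 * Re (\<phi> idm) + opnorm s2 * Re (\<phi> idm)"
    using selfadj_bound(2)[OF P u1 a1] selfadj_bound(2)[OF P u2 a2] by simp
  also have "\<dots> \<le> opnorm c * Re (\<phi> idm) + opnorm c * Re (\<phi> idm)"
    using phi_pos[OF P uroe_idm idm_pos] n1 n2 by (intro add_mono mult_right_mono) auto
  finally show ?thesis by simp
qed


definition pS :: "'x set \<Rightarrow> 'x \<Rightarrow> complex" where "pS S = (\<lambda>x. if x \<in> S then 1 else 0)"
definition qS :: "'x set \<Rightarrow> 'x \<Rightarrow> complex" where "qS S = (\<lambda>x. if x \<in> S then 0 else 1)"

lemma pS_le: "cmod (pS S x) \<le> 1" and qS_le: "cmod (qS S x) \<le> 1" and delta_le: "cmod (delta y x) \<le> 1"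
  by (auto simp: pS_def qS_def delta_def)

lemma dmat_pos:
  fixes r :: "'x \<Rightarrow> real"
  assumes "\<And>x. 0 \<le> r x" "\<And>x. r x \<le> 1"
  shows "pos_op (dmat (\<lambda>x. complex_of_real (r x)))"
  unfolding pos_op_def
proof (intro conjI ballI)
  show "bounded_op (dmat (\<lambda>x. complex_of_real (r x)))" by (rule bounded_dmat(1)) (use assms in auto)
  fix v :: "'x \<Rightarrow> complex" assume v: "v \<in> l2"
  have "l2inner (mapply (dmat (\<lambda>x. complex_of_real (r x))) v) v
      = infsum (\<lambda>x. complex_of_real (r x * (cmod (v x))\<^sup>2)) UNIV"
    unfolding mapply_dmat l2inner_def by (simp add: mult.assoc complex_norm_square[symmetric])
  also have "\<dots> = complex_of_real (infsum (\<lambda>x. r x * (cmod (v x))\<^sup>2) UNIV)" by (rule infsum_of_real_gen)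
  finally have e: "l2inner (mapply (dmat (\<lambda>x. complex_of_real (r x))) v) v = complex_of_real (infsum (\<lambda>x. r x * (cmod (v x))\<^sup>2) UNIV)" .
  have "infsum (\<lambda>x. r x * (cmod (v x))\<^sup>2) UNIV \<ge> 0" by (rule Infinite_Sum.infsum_nonneg) (use assms in simp)
  then show "Im (l2inner (mapply (dmat (\<lambda>x. complex_of_real (r x))) v) v) = 0"
    and "0 \<le> Re (l2inner (mapply (dmat (\<lambda>x. complex_of_real (r x))) v) v)" unfolding e by auto
qed

lemma delta_of_real: "delta y = (\<lambda>x. complex_of_real (if x = y then 1 else 0))"
  by (auto simp: delta_def)
lemma pS_of_real: "pS S = (\<lambda>x. complex_of_real (if x \<in> S then 1 else 0))"
  by (auto simp: pS_def)
lemma qS_of_real: "qS S = (\<lambda>x. complex_of_real (if x \<in> S then 0 else 1))"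
  by (auto simp: qS_def)

lemma ematrix_pos: "pos_op (ematrix x)"
  unfolding ematrix_dmat delta_of_real by (rule dmat_pos) auto

lemma qS_pos: "pos_op (dmat (qS S))"
  unfolding qS_of_real by (rule dmat_pos) auto

lemma ew_pos: "pos_functional uroe \<phi> \<Longrightarrow> Im (\<phi> (ematrix x)) = 0 \<and> Re (\<phi> (ematrix x)) \<ge> 0"
  by (rule phi_pos[OF _ uroe_ematrix ematrix_pos])

lemma ew_real: "pos_functional uroe \<phi> \<Longrightarrow> \<phi> (ematrix x) = complex_of_real (Re (\<phi> (ematrix x)))"
  using ew_pos[of \<phi> x] by (simp add: complex_eq_iff)

lemma dmat_pS_insert: "x \<notin> S \<Longrightarrow> dmat (pS (insert x S)) = madd (ematrix x) (dmat (pS S))"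
  by (auto simp: dmat_def pS_def ematrix_def madd_def intro!: ext)

lemma dmat_pS_empty: "dmat (pS {}) = zmat"
  by (auto simp: dmat_def pS_def zmat_def intro!: ext)

lemma phi_pS:
  assumes P: "pos_functional uroe \<phi>" and S: "finite S"
  shows "\<phi> (dmat (pS S)) = (\<Sum>x\<in>S. \<phi> (ematrix x))"
  using S
proof (induction S rule: finite_induct)
  case empty then show ?case by (simp add: dmat_pS_empty phi_zmat[OF P])
next
  case (insert x S)
  then show ?case
    by (simp add: dmat_pS_insert phi_add[OF P] uroe_ematrix uroe_dmat pS_le)
qed

lemma ew_partial:
  assumes P: "pos_functional uroe \<phi>" and S: "finite S"
  shows "(\<Sum>x\<in>S. Re (\<phi> (ematrix x))) \<le> Re (\<phi> idm)"
proof -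
  have "idm = madd (dmat (pS S)) (dmat (qS S))"
    by (auto simp: idm_def dmat_def pS_def qS_def madd_def intro!: ext)
  then have "\<phi> idm = \<phi> (dmat (pS S)) + \<phi> (dmat (qS S))"
    using phi_add[OF P uroe_dmat[where d="pS S", OF pS_le] uroe_dmat[where d="qS S", OF qS_le]] by simp
  moreover have "Re (\<phi> (dmat (qS S))) \<ge> 0" using phi_pos[OF P uroe_dmat[OF qS_le] qS_pos] by simp
  ultimately show ?thesis by (simp add: phi_pS[OF P S] Re_sum)
qed

lemma ew_summable:
  assumes P: "pos_functional uroe \<phi>"
  shows "(\<lambda>x. Re (\<phi> (ematrix x))) summable_on UNIV"
    and "infsum (\<lambda>x. Re (\<phi> (ematrix x))) UNIV \<le> Re (\<phi> idm)"
proof -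
  show s: "(\<lambda>x. Re (\<phi> (ematrix x))) summable_on UNIV"
    by (rule nonneg_bdd_above_summable_on)
       (use ew_pos[OF P] ew_partial[OF P] in \<open>auto intro!: bdd_aboveI[where M="Re (\<phi> idm)"]\<close>)
  show "infsum (\<lambda>x. Re (\<phi> (ematrix x))) UNIV \<le> Re (\<phi> idm)"
    by (rule infsum_le_finite_sums[OF s]) (use ew_partial[OF P] in auto)
qed

lemma psi_abs_summable:
  assumes P: "pos_functional uroe \<phi>" and a: "bounded_op a"
  shows "(\<lambda>x. norm (a x x * \<phi> (ematrix x))) summable_on UNIV"
proof (rule summable_on_comparison_test)
  show "(\<lambda>x. opnorm a * Re (\<phi> (ematrix x))) summable_on UNIV"
    by (rule summable_on_cmult_right[OF ew_summable(1)[OF P]])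
  show "norm (a x x * \<phi> (ematrix x)) \<le> opnorm a * Re (\<phi> (ematrix x))" for x
  proof -
    have "norm (a x x * \<phi> (ematrix x)) = cmod (a x x) * Re (\<phi> (ematrix x))"
      by (subst ew_real[OF P]) (simp add: norm_mult ew_pos[OF P])
    also have "\<dots> \<le> opnorm a * Re (\<phi> (ematrix x))"
      by (rule mult_right_mono[OF entry_bound[OF a]]) (simp add: ew_pos[OF P])
    finally show ?thesis .
  qed
qed auto

lemma psi_summable:
  assumes P: "pos_functional uroe \<phi>" and a: "bounded_op a"
  shows "(\<lambda>x. a x x * \<phi> (ematrix x)) summable_on UNIV"
  by (rule Infinite_Sum.abs_summable_summable[OF psi_abs_summable[OF P a]])

lemma diag_pos:
  assumes "pos_op a"
  shows "Im (a x x) = 0 \<and> Re (a x x) \<ge> 0"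
proof -
  have b: "bounded_op a" using assms by (simp add: pos_op_def)
  have "l2inner (mapply a (delta x)) (delta x) = a x x"
    unfolding mapply_delta l2inner_def by (subst infsum_single_pt[where y=x]) (auto simp: delta_def)
  then show ?thesis using assms delta_l2[of x] unfolding pos_op_def by metis
qed

lemma psi_pos_functional:
  fixes \<phi> :: "'x::metric_space mat \<Rightarrow> complex"
  assumes P: "pos_functional uroe \<phi>"
  shows "pos_functional uroe (\<lambda>a. infsum (\<lambda>x. a x x * \<phi> (ematrix x)) UNIV)"
  unfolding pos_functional_def lin_functional_def
proof (intro conjI ballI allI impI)
  fix a b :: "'x mat" assume a: "a \<in> uroe" and b: "b \<in> uroe"
  show "infsum (\<lambda>x. madd a b x x * \<phi> (ematrix x)) UNIV
      = infsum (\<lambda>x. a x x * \<phi> (ematrix x)) UNIV + infsum (\<lambda>x. b x x * \<phi> (ematrix x)) UNIV"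
    using infsum_add[OF psi_summable[OF P uroe_bounded[OF a]] psi_summable[OF P uroe_bounded[OF b]]]
    by (simp add: madd_def distrib_right)
next
  fix c and a :: "'x mat" assume a: "a \<in> uroe"
  show "infsum (\<lambda>x. mscale c a x x * \<phi> (ematrix x)) UNIV = c * infsum (\<lambda>x. a x x * \<phi> (ematrix x)) UNIV"
    by (simp add: mscale_def mult.assoc infsum_cmult_right')
next
  fix a :: "'x mat" assume a: "a \<in> uroe" and p: "pos_op a"
  have s: "(\<lambda>x. a x x * \<phi> (ematrix x)) summable_on UNIV" by (rule psi_summable[OF P uroe_bounded[OF a]])
  have t: "a x x * \<phi> (ematrix x) = complex_of_real (Re (a x x) * Re (\<phi> (ematrix x)))" for x
    using diag_pos[OF p, of x] ew_pos[OF P, of x] by (simp add: complex_eq_iff)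
  have "Im (infsum (\<lambda>x. a x x * \<phi> (ematrix x)) UNIV) = infsum (\<lambda>x. Im (a x x * \<phi> (ematrix x))) UNIV"
    by (rule infsum_Im[OF s, symmetric])
  also have "\<dots> = 0" by (simp add: t)
  finally show "Im (infsum (\<lambda>x. a x x * \<phi> (ematrix x)) UNIV) = 0" .
  have "Re (infsum (\<lambda>x. a x x * \<phi> (ematrix x)) UNIV) = infsum (\<lambda>x. Re (a x x * \<phi> (ematrix x))) UNIV"
    by (rule infsum_Re[OF s, symmetric])
  also have "\<dots> \<ge> 0" unfolding t
    by (rule Infinite_Sum.infsum_nonneg) (use diag_pos[OF p] ew_pos[OF P] in simp)
  finally show "0 \<le> Re (infsum (\<lambda>x. a x x * \<phi> (ematrix x)) UNIV)" .
qed

lemma lmul_pS_insert: "x \<notin> S \<Longrightarrow> lmul (pS (insert x S)) a = madd (lmul (delta x) a) (lmul (pS S) a)"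
  by (auto simp: lmul_def pS_def delta_def madd_def intro!: ext)

lemma lmul_pS_empty: "lmul (pS {}) a = zmat"
  by (auto simp: lmul_def pS_def zmat_def intro!: ext)

lemma phi_lmul_delta:
  assumes P: "pos_functional uroe \<phi>" and K: "kms_condition uroe h \<beta> \<phi>" and a: "a \<in> uroe"
  shows "\<phi> (lmul (delta x) a) = a x x * \<phi> (ematrix x)"
proof -
  have c: "lmul (delta x) a \<in> uroe" by (rule uroe_lmul[OF a delta_le])
  have "\<phi> (rmul (lmul (delta x) a) (delta x)) = \<phi> (lmul (delta x) (lmul (delta x) a))"
    by (rule kms_diag[OF K c delta_le])
  moreover have "lmul (delta x) (lmul (delta x) a) = lmul (delta x) a"
    by (auto simp: lmul_def delta_def intro!: ext)
  moreover have "rmul (lmul (delta x) a) (delta x) = mscale (a x x) (ematrix x)"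
    by (auto simp: rmul_def lmul_def delta_def mscale_def ematrix_def intro!: ext)
  ultimately show ?thesis by (simp add: phi_scale[OF P uroe_ematrix])
qed

lemma phi_lmul_pS:
  assumes P: "pos_functional uroe \<phi>" and K: "kms_condition uroe h \<beta> \<phi>" and a: "a \<in> uroe"
    and S: "finite S"
  shows "\<phi> (lmul (pS S) a) = (\<Sum>x\<in>S. a x x * \<phi> (ematrix x))"
  using S
proof (induction S rule: finite_induct)
  case empty then show ?case by (simp add: lmul_pS_empty phi_zmat[OF P])
next
  case (insert x S)
  then show ?case
    by (simp add: lmul_pS_insert phi_add[OF P] uroe_lmul[OF a] delta_le pS_le
        phi_lmul_delta[OF P K a])
qed

definition cut :: "'x set \<Rightarrow> 'x mat \<Rightarrow> 'x mat" where
  "cut S a = rmul (lmul (qS S) a) (qS S)"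

lemma uroe_cut: "a \<in> uroe \<Longrightarrow> cut S a \<in> uroe"
  unfolding cut_def by (intro uroe_rmul uroe_lmul qS_le)

lemma key_decomp:
  assumes P: "pos_functional uroe \<phi>" and K: "kms_condition uroe h \<beta> \<phi>" and a: "a \<in> uroe"
    and S: "finite S"
  shows "\<phi> a - (\<Sum>x\<in>S. a x x * \<phi> (ematrix x)) = \<phi> (cut S a)"
proof -
  have qa: "lmul (qS S) a \<in> uroe" by (rule uroe_lmul[OF a qS_le])
  have e1: "a = madd (lmul (pS S) a) (lmul (qS S) a)"
    by (auto simp: lmul_def pS_def qS_def madd_def intro!: ext)
  have e2: "lmul (qS S) a = madd (cut S a) (rmul (lmul (qS S) a) (pS S))"
    by (auto simp: cut_def lmul_def rmul_def pS_def qS_def madd_def intro!: ext)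
  have e3: "lmul (pS S) (lmul (qS S) a) = zmat"
    by (auto simp: lmul_def pS_def qS_def zmat_def intro!: ext)
  have "\<phi> (rmul (lmul (qS S) a) (pS S)) = \<phi> (lmul (pS S) (lmul (qS S) a))"
    by (rule kms_diag[OF K qa pS_le])
  then have z: "\<phi> (rmul (lmul (qS S) a) (pS S)) = 0" by (simp add: e3 phi_zmat[OF P])
  have "\<phi> (lmul (qS S) a) = \<phi> (cut S a)"
    by (subst e2) (simp add: phi_add[OF P] uroe_cut[OF a] uroe_rmul[OF qa pS_le] z)
  moreover have "\<phi> a = \<phi> (lmul (pS S) a) + \<phi> (lmul (qS S) a)"
    by (subst e1) (simp add: phi_add[OF P] uroe_lmul[OF a] pS_le qS_le)
  ultimately show ?thesis by (simp add: phi_lmul_pS[OF P K a S])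
qed

lemma l2inner_qS: "l2inner (\<lambda>x. qS S x * w x) v = l2inner w (\<lambda>x. qS S x * v x)"
  unfolding l2inner_def by (rule infsum_cong) (simp add: qS_def)

lemma cut_pos:
  fixes a :: "'x mat"
  assumes a: "pos_op a" shows "pos_op (cut S a)"
proof -
  have b: "bounded_op a" using a by (simp add: pos_op_def)
  have cb: "bounded_op (cut S a)" unfolding cut_def by (intro bounded_rmul bounded_lmul b qS_le)
  show ?thesis unfolding pos_op_def
  proof (intro conjI cb ballI)
    fix v :: "'x \<Rightarrow> complex" assume v: "v \<in> l2"
    have w: "(\<lambda>y. qS S y * v y) \<in> l2" by (rule dvec_l2(1)[OF v qS_le])
    have "l2inner (mapply (cut S a) v) v = l2inner (mapply a (\<lambda>y. qS S y * v y)) (\<lambda>y. qS S y * v y)"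
      unfolding cut_def mapply_rmul mapply_lmul l2inner_qS ..
    then show "Im (l2inner (mapply (cut S a) v) v) = 0" and "0 \<le> Re (l2inner (mapply (cut S a) v) v)"
      using a w unfolding pos_op_def by auto
  qed
qed

lemma psi_has_sum:
  assumes P: "pos_functional uroe \<phi>" and a: "bounded_op a"
  shows "((\<lambda>S. \<Sum>x\<in>S. a x x * \<phi> (ematrix x)) \<longlongrightarrow> infsum (\<lambda>x. a x x * \<phi> (ematrix x)) UNIV)
           (finite_subsets_at_top UNIV)"
  using psi_summable[OF P a] unfolding summable_iff_has_sum_infsum has_sum_def .

lemma diff_pos:
  fixes \<phi> :: "'x::metric_space mat \<Rightarrow> complex"
  assumes P: "pos_functional uroe \<phi>" and K: "kms_condition uroe h \<beta> \<phi>" and a: "a \<in> uroe"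
    and p: "pos_op a"
  shows "Im (\<phi> a - infsum (\<lambda>x. a x x * \<phi> (ematrix x)) UNIV) = 0 \<and>
         Re (\<phi> a - infsum (\<lambda>x. a x x * \<phi> (ematrix x)) UNIV) \<ge> 0"
proof -
  define F where "F = finite_subsets_at_top (UNIV :: 'x set)"
  have Fnb: "F \<noteq> bot" unfolding F_def by simp
  have lim: "((\<lambda>S. \<phi> a - (\<Sum>x\<in>S. a x x * \<phi> (ematrix x))) \<longlongrightarrow> \<phi> a - infsum (\<lambda>x. a x x * \<phi> (ematrix x)) UNIV) F"
    unfolding F_def by (intro tendsto_diff tendsto_const psi_has_sum[OF P uroe_bounded[OF a]])
  have ev: "\<forall>\<^sub>F S in F. Im (\<phi> a - (\<Sum>x\<in>S. a x x * \<phi> (ematrix x))) = 0 \<and> Re (\<phi> a - (\<Sum>x\<in>S. a x x * \<phi> (ematrix x))) \<ge> 0"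
    unfolding F_def eventually_finite_subsets_at_top
  proof (intro exI[of _ "{}"] conjI allI impI; clarify)
    fix S :: "'x set" assume S: "finite S"
    show "Im (\<phi> a - (\<Sum>x\<in>S. a x x * \<phi> (ematrix x))) = 0" "Re (\<phi> a - (\<Sum>x\<in>S. a x x * \<phi> (ematrix x))) \<ge> 0"
      unfolding key_decomp[OF P K a S] using phi_pos[OF P uroe_cut[OF a] cut_pos[OF p]] by auto
  qed
  have li: "((\<lambda>S. Im (\<phi> a - (\<Sum>x\<in>S. a x x * \<phi> (ematrix x)))) \<longlongrightarrow> Im (\<phi> a - infsum (\<lambda>x. a x x * \<phi> (ematrix x)) UNIV)) F"
    by (rule tendsto_Im[OF lim])
  have lr: "((\<lambda>S. Re (\<phi> a - (\<Sum>x\<in>S. a x x * \<phi> (ematrix x)))) \<longlongrightarrow> Re (\<phi> a - infsum (\<lambda>x. a x x * \<phi> (ematrix x)) UNIV)) F"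
    by (rule tendsto_Re[OF lim])
  have "((\<lambda>S. Im (\<phi> a - (\<Sum>x\<in>S. a x x * \<phi> (ematrix x)))) \<longlongrightarrow> 0) F"
    by (rule Lim_transform_eventually[OF tendsto_const]) (use ev in \<open>auto elim: eventually_mono\<close>)
  then have "Im (\<phi> a - infsum (\<lambda>x. a x x * \<phi> (ematrix x)) UNIV) = 0"
    using tendsto_unique[OF Fnb li] by blast
  moreover have "Re (\<phi> a - infsum (\<lambda>x. a x x * \<phi> (ematrix x)) UNIV) \<ge> 0"
    by (rule tendsto_lowerbound[OF lr _ Fnb]) (use ev in \<open>auto elim: eventually_mono\<close>)
  ultimately show ?thesis by simp
qed


lemma zero_limpt_reals: "(0::complex) islimpt range complex_of_real"
  unfolding islimpt_sequential
proof (intro exI conjI allI)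
  show "complex_of_real (1 / (real n + 1)) \<in> range complex_of_real - {0}" for n
  proof -
    have "complex_of_real (1 / (real n + 1)) \<noteq> 0" by (simp only: of_real_eq_0_iff) simp
    then show ?thesis by (blast intro: rangeI)
  qed
  have "((\<lambda>n. 1 / (real n + 1)) \<longlongrightarrow> 0) sequentially"
    using LIMSEQ_inverse_real_of_nat by (simp add: inverse_eq_divide add.commute)
  then have "((\<lambda>n. complex_of_real (1 / (real n + 1))) \<longlongrightarrow> complex_of_real 0) sequentially"
    by (rule tendsto_of_real)
  then show "((\<lambda>n. complex_of_real (1 / (real n + 1))) \<longlongrightarrow> 0) sequentially" by simp
qed

lemma entry_deriv:
  assumes E: "entire_op F" and U: "\<And>z. F z \<in> uroe"
  shows "((\<lambda>z. F z y x) has_field_derivative (SOME D. bounded_op D \<and> ((\<lambda>w. opnorm (msub (mscale (1 / (w - z0)) (msub (F w) (F z0))) D)) \<longlongrightarrow> 0) (at z0)) y x) (at z0)"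
proof -
  define D where "D = (SOME D. bounded_op D \<and> ((\<lambda>w. opnorm (msub (mscale (1 / (w - z0)) (msub (F w) (F z0))) D)) \<longlongrightarrow> 0) (at z0))"
  have "\<exists>D. bounded_op D \<and> ((\<lambda>w. opnorm (msub (mscale (1 / (w - z0)) (msub (F w) (F z0))) D)) \<longlongrightarrow> 0) (at z0)"
    using E unfolding entire_op_def by blast
  then have "bounded_op D \<and> ((\<lambda>w. opnorm (msub (mscale (1 / (w - z0)) (msub (F w) (F z0))) D)) \<longlongrightarrow> 0) (at z0)"
    unfolding D_def by (rule someI_ex)
  then have D: "bounded_op D" "((\<lambda>w. opnorm (msub (mscale (1 / (w - z0)) (msub (F w) (F z0))) D)) \<longlongrightarrow> 0) (at z0)"
    by auto
  define M where "M w = msub (mscale (1 / (w - z0)) (msub (F w) (F z0))) D" for w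
  have Mb: "bounded_op (M w)" for w
    unfolding M_def
    by (intro bounded_msub(1) bounded_mscale(1) D(1) uroe_bounded U)
  have "((\<lambda>w. M w y x) \<longlongrightarrow> 0) (at z0)"
  proof (rule Lim_null_comparison)
    show "\<forall>\<^sub>F w in at z0. norm (M w y x) \<le> opnorm (M w)"
      by (intro always_eventually allI entry_bound Mb)
    show "((\<lambda>w. opnorm (M w)) \<longlongrightarrow> 0) (at z0)" using D(2) unfolding M_def .
  qed
  then have "((\<lambda>w. M w y x + D y x) \<longlongrightarrow> 0 + D y x) (at z0)"
    by (intro tendsto_add tendsto_const)
  moreover have "M w y x + D y x = (F w y x - F z0 y x) / (w - z0)" for w
    unfolding M_def by (simp add: msub_def mscale_def)
  ultimately have "((\<lambda>w. (F w y x - F z0 y x) / (w - z0)) \<longlongrightarrow> D y x) (at z0)" by simp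
  then show ?thesis unfolding D_def[symmetric] by (simp add: has_field_derivative_iff)
qed

lemma entry_formula:
  assumes A: "analytic_ext uroe h b F"
  shows "F z y x = exp (\<i> * z * of_real (h y)) * b y x * exp (- \<i> * z * of_real (h x))"
proof -
  have E: "entire_op F" and U: "\<And>z. F z \<in> uroe" and T: "\<And>t. F (of_real t) = sigma h t b"
    using A unfolding analytic_ext_def by auto
  define g where "g z = F z y x - exp (\<i> * z * of_real (h y)) * b y x * exp (- \<i> * z * of_real (h x))" for z
  have hf: "(\<lambda>z. F z y x) holomorphic_on UNIV"
    unfolding holomorphic_on_def field_differentiable_def using entry_deriv[OF E U] by blast
  have hg: "g holomorphic_on UNIV" unfolding g_def by (intro holomorphic_intros hf)
  have "g z = 0"
  proof (rule analytic_continuation[OF hg open_UNIV connected_UNIV subset_UNIV UNIV_I zero_limpt_reals _ UNIV_I])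
    fix w assume "w \<in> range complex_of_real"
    then obtain t where wt: "w = of_real t" by auto
    show "g w = 0" unfolding wt g_def using T[of t] by (simp add: sigma_def)
  qed
  then show ?thesis unfolding g_def by simp
qed

lemma mmult_eunit: "mmult (eunit x y) (mscale k (eunit y x)) = mscale k (ematrix x)"
  unfolding mmult_def
  by (intro ext, subst infsum_single_pt[where y=y]) (auto simp: eunit_def mscale_def ematrix_def)

lemma mmult_eunit2: "mmult (eunit y x) (eunit x y) = ematrix y"
  unfolding mmult_def
  by (intro ext, subst infsum_single_pt[where y=x]) (auto simp: eunit_def ematrix_def)

lemma analytic_eunit:
  fixes h :: "'x::metric_space \<Rightarrow> real" and x y :: 'x
  defines "c \<equiv> (\<lambda>z. exp (\<i> * z * of_real (h y)) * exp (- \<i> * z * of_real (h x)))"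
  shows "analytic_ext uroe h (eunit y x) (\<lambda>z. mscale (c z) (eunit y x))"
  unfolding analytic_ext_def
proof (intro conjI allI)
  show "mscale (c z) (eunit y x) \<in> uroe" for z by (rule uroe_mscale[OF uroe_eunit])
  show "mscale (c (complex_of_real t)) (eunit y x) = sigma h t (eunit y x)" for t
    by (auto simp: c_def sigma_def mscale_def eunit_def intro!: ext)
  show "entire_op (\<lambda>z. mscale (c z) (eunit y x))"
    unfolding entire_op_def
  proof
    fix z
    have "c holomorphic_on UNIV" unfolding c_def by (intro holomorphic_intros)
    then have "c field_differentiable at z" using holomorphic_on_imp_differentiable_at[OF _ open_UNIV] by blast
    then obtain c' where c': "(c has_field_derivative c') (at z)" unfolding field_differentiable_def by blast
    then have lim: "((\<lambda>w. (c w - c z) / (w - z) - c') \<longlongrightarrow> 0) (at z)"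
      unfolding has_field_derivative_iff by (rule LIM_zero)
    have eq: "msub (mscale (1 / (w - z)) (msub (mscale (c w) (eunit y x)) (mscale (c z) (eunit y x)))) (mscale c' (eunit y x))
         = mscale ((c w - c z) / (w - z) - c') (eunit y x)" for w
      by (auto simp: msub_def mscale_def eunit_def intro!: ext)
    show "\<exists>D. bounded_op D \<and> ((\<lambda>w. opnorm (msub (mscale (1 / (w - z)) (msub (mscale (c w) (eunit y x)) (mscale (c z) (eunit y x)))) D)) \<longlongrightarrow> 0) (at z)"
    proof (intro exI conjI)
      show "bounded_op (mscale c' (eunit y x))" by (rule bounded_mscale(1)[OF bounded_eunit])
      show "((\<lambda>w. opnorm (msub (mscale (1 / (w - z)) (msub (mscale (c w) (eunit y x)) (mscale (c z) (eunit y x)))) (mscale c' (eunit y x)))) \<longlongrightarrow> 0) (at z)"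
        unfolding eq
      proof (rule tendsto_sandwich[OF _ _ tendsto_const])
        show "\<forall>\<^sub>F w in at z. 0 \<le> opnorm (mscale ((c w - c z) / (w - z) - c') (eunit y x))"
          by (intro always_eventually allI opnorm_nonneg bounded_mscale(1) bounded_eunit)
        show "\<forall>\<^sub>F w in at z. opnorm (mscale ((c w - c z) / (w - z) - c') (eunit y x)) \<le> cmod ((c w - c z) / (w - z) - c')"
        proof (intro always_eventually allI)
          fix w
          have "opnorm (mscale ((c w - c z) / (w - z) - c') (eunit y x)) \<le> cmod ((c w - c z) / (w - z) - c') * opnorm (eunit y x)"
            by (rule bounded_mscale(2)[OF bounded_eunit])
          also have "\<dots> \<le> cmod ((c w - c z) / (w - z) - c') * 1"
            by (rule mult_left_mono[OF opnorm_eunit norm_ge_zero])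
          finally show "opnorm (mscale ((c w - c z) / (w - z) - c') (eunit y x)) \<le> cmod ((c w - c z) / (w - z) - c')" by simp
        qed
        show "((\<lambda>w. cmod ((c w - c z) / (w - z) - c')) \<longlongrightarrow> 0) (at z)"
          using tendsto_norm[OF lim] by simp
      qed
    qed
  qed
qed

lemma ew_relation:
  assumes P: "pos_functional uroe \<phi>" and K: "kms_condition uroe h \<beta> \<phi>"
  shows "\<phi> (ematrix y) = exp (\<i> * (\<i> * of_real \<beta>) * of_real (h y)) * exp (- \<i> * (\<i> * of_real \<beta>) * of_real (h x)) * \<phi> (ematrix x)"
proof -
  define k where "k = exp (\<i> * (\<i> * of_real \<beta>) * of_real (h y)) * exp (- \<i> * (\<i> * of_real \<beta>) * of_real (h x))"
  have "\<phi> (mmult (eunit x y) (mscale k (eunit y x))) = \<phi> (mmult (eunit y x) (eunit x y))"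
    using K[unfolded kms_condition_def, rule_format, OF uroe_eunit[of x y] uroe_eunit[of y x] analytic_eunit[of h y x]]
    unfolding k_def by simp
  then have "\<phi> (mscale k (ematrix x)) = \<phi> (ematrix y)"
    by (simp only: mmult_eunit mmult_eunit2)
  then show ?thesis by (simp add: phi_scale[OF P uroe_ematrix] k_def)
qed

lemma swap_summable:
  assumes P: "pos_functional uroe \<phi>" and a: "bounded_op a" and b: "bounded_op b"
  shows "(\<lambda>(x, y). a x y * b y x * \<phi> (ematrix y)) summable_on UNIV \<times> UNIV"
proof -
  define e where "e y = Re (\<phi> (ematrix y))" for y
  have e0: "e y \<ge> 0" for y unfolding e_def using ew_pos[OF P] by simp
  have nrm: "norm (a x y * b y x * \<phi> (ematrix y)) = cmod (a x y) * cmod (b y x) * e y" for x y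
    unfolding e_def by (subst ew_real[OF P]) (simp add: norm_mult ew_pos[OF P])
  have inner: "(\<Sum>x\<in>A. cmod (a x y) * cmod (b y x)) \<le> opnorm a * opnorm b" if "finite A" for A y
  proof -
    have cl: "(\<lambda>x. a x y) \<in> l2" "l2norm (\<lambda>x. a x y) \<le> opnorm a" using column_l2[OF a, of y] by auto
    have rl: "(\<lambda>x. b y x) \<in> l2" "l2norm (\<lambda>x. b y x) \<le> opnorm b" using row_l2[OF b, of y] by auto
    have "(\<Sum>x\<in>A. cmod (a x y) * cmod (b y x)) \<le> infsum (\<lambda>x. cmod (a x y) * cmod (b y x)) UNIV"
      by (rule finite_sum_le_infsum[OF l2_abs_prod_summable[OF cl(1) rl(1)] that]) auto
    also have "\<dots> \<le> l2norm (\<lambda>x. a x y) * l2norm (\<lambda>x. b y x)" by (rule cs_real[OF cl(1) rl(1)])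
    also have "\<dots> \<le> opnorm a * opnorm b"
      by (rule mult_mono[OF cl(2) rl(2) opnorm_nonneg[OF a] l2norm_nonneg])
    finally show ?thesis .
  qed
  have bound: "(\<Sum>p\<in>W. norm ((\<lambda>(x, y). a x y * b y x * \<phi> (ematrix y)) p)) \<le> opnorm a * opnorm b * Re (\<phi> idm)"
    if W: "finite W" for W
  proof -
    define A where "A = fst ` W"
    define B where "B = snd ` W"
    have fA: "finite A" and fB: "finite B" using W unfolding A_def B_def by auto
    have sub: "W \<subseteq> A \<times> B" unfolding A_def B_def by force
    have "(\<Sum>p\<in>W. norm ((\<lambda>(x, y). a x y * b y x * \<phi> (ematrix y)) p))
        \<le> (\<Sum>p\<in>A \<times> B. norm ((\<lambda>(x, y). a x y * b y x * \<phi> (ematrix y)) p))"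
      by (rule sum_mono2[OF finite_cartesian_product[OF fA fB] sub]) auto
    also have "\<dots> = (\<Sum>x\<in>A. \<Sum>y\<in>B. cmod (a x y) * cmod (b y x) * e y)"
      unfolding sum.cartesian_product by (rule sum.cong) (auto simp: nrm)
    also have "\<dots> = (\<Sum>y\<in>B. e y * (\<Sum>x\<in>A. cmod (a x y) * cmod (b y x)))"
      by (subst sum.swap) (simp add: sum_distrib_left mult_ac)
    also have "\<dots> \<le> (\<Sum>y\<in>B. e y * (opnorm a * opnorm b))"
      by (rule sum_mono, rule mult_left_mono[OF inner[OF fA] e0])
    also have "\<dots> = (\<Sum>y\<in>B. e y) * (opnorm a * opnorm b)" by (simp add: sum_distrib_right)
    also have "\<dots> \<le> Re (\<phi> idm) * (opnorm a * opnorm b)"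
      by (rule mult_right_mono[OF ew_partial[OF P fB, folded e_def]])
         (simp add: opnorm_nonneg[OF a] opnorm_nonneg[OF b])
    finally show ?thesis by (simp add: mult_ac)
  qed
  have "(\<lambda>p. norm ((\<lambda>(x, y). a x y * b y x * \<phi> (ematrix y)) p)) summable_on UNIV \<times> UNIV"
    by (rule nonneg_bdd_above_summable_on) (use bound in \<open>auto intro!: bdd_aboveI\<close>)
  then show ?thesis by (rule Infinite_Sum.abs_summable_summable)
qed

lemma psi_kms:
  fixes \<phi> :: "'x::metric_space mat \<Rightarrow> complex"
  assumes P: "pos_functional uroe \<phi>" and K: "kms_condition uroe h \<beta> \<phi>"
  shows "kms_condition uroe h \<beta> (\<lambda>a. infsum (\<lambda>x. a x x * \<phi> (ematrix x)) UNIV)"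
  unfolding kms_condition_def
proof (intro ballI allI impI)
  fix a b :: "'x mat" and F assume a: "a \<in> uroe" and b: "b \<in> uroe" and A: "analytic_ext uroe h b F"
  define f where "f x y = a x y * b y x * \<phi> (ematrix y)" for x y
  have G: "F (\<i> * of_real \<beta>) y x * \<phi> (ematrix x) = b y x * \<phi> (ematrix y)" for x y
    unfolding entry_formula[OF A, of "\<i> * of_real \<beta>" y x] ew_relation[OF P K, of y x]
    by (simp add: mult_ac)
  have "infsum (\<lambda>x. mmult a (F (\<i> * of_real \<beta>)) x x * \<phi> (ematrix x)) UNIV
      = infsum (\<lambda>x. infsum (\<lambda>y. a x y * F (\<i> * of_real \<beta>) y x * \<phi> (ematrix x)) UNIV) UNIV"
    unfolding mmult_def by (simp add: infsum_cmult_left')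
  also have "\<dots> = infsum (\<lambda>x. infsum (\<lambda>y. f x y) UNIV) UNIV"
    unfolding f_def by (simp add: mult.assoc G)
  also have "\<dots> = infsum (\<lambda>y. infsum (\<lambda>x. f x y) UNIV) UNIV"
    by (rule infsum_swap_banach)
       (use swap_summable[OF P uroe_bounded[OF a] uroe_bounded[OF b]] in \<open>simp add: f_def\<close>)
  also have "\<dots> = infsum (\<lambda>y. mmult b a y y * \<phi> (ematrix y)) UNIV"
    unfolding mmult_def f_def by (simp add: infsum_cmult_left' infsum_cmult_right' mult_ac)
  finally show "infsum (\<lambda>x. mmult a (F (\<i> * of_real \<beta>)) x x * \<phi> (ematrix x)) UNIV
      = infsum (\<lambda>x. mmult b a x x * \<phi> (ematrix x)) UNIV" .
qed


lemma diag_diff_bound: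
  assumes a: "bounded_op a" and b: "bounded_op b"
  shows "cmod (b x x - a x x) \<le> l2norm (vdiff (mapply b (delta x)) (mapply a (delta x)))"
proof -
  have "vdiff (mapply b (delta x)) (mapply a (delta x)) \<in> l2"
    by (rule l2_diff(1)[OF bounded_l2[OF b delta_l2] bounded_l2[OF a delta_l2]])
  from l2_coord[OF this, of x] show ?thesis by (simp add: vdiff_def mapply_delta)
qed

lemma psi_strong:
  fixes \<phi> :: "'x::metric_space mat \<Rightarrow> complex"
  assumes P: "pos_functional uroe \<phi>"
  shows "strongly_continuous uroe (\<lambda>a. infsum (\<lambda>x. a x x * \<phi> (ematrix x)) UNIV)"
  unfolding strongly_continuous_def
proof (intro allI ballI impI)
  fix R :: real and a :: "'x mat" and F :: "'x mat filter"
  assume a: "a \<in> uroe" and aR: "opnorm a \<le> R"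
    and ev: "\<forall>\<^sub>F b in F. b \<in> uroe \<and> opnorm b \<le> R"
    and st: "\<forall>v\<in>l2. ((\<lambda>b. l2norm (vdiff (mapply b v) (mapply a v))) \<longlongrightarrow> 0) F"
  define \<psi> where "\<psi> b = infsum (\<lambda>x. b x x * \<phi> (ematrix x)) UNIV" for b :: "'x mat"
  define e where "e x = Re (\<phi> (ematrix x))" for x
  define E where "E = Re (\<phi> idm)"
  have ab: "bounded_op a" by (rule uroe_bounded[OF a])
  have R0: "R \<ge> 0" using opnorm_nonneg[OF ab] aR by simp
  have e0: "e x \<ge> 0" for x unfolding e_def using ew_pos[OF P] by simp
  have es: "e summable_on UNIV" unfolding e_def by (rule ew_summable(1)[OF P])
  have eS: "sum e S \<le> E" if "finite S" for S unfolding e_def E_def by (rule ew_partial[OF P that])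
  have E0: "E \<ge> 0" using eS[of "{}"] by simp
  show "(\<psi> \<longlongrightarrow> \<psi> a) F" unfolding tendsto_iff
  proof (intro allI impI)
    fix \<epsilon> :: real assume \<epsilon>: "\<epsilon> > 0"
    define \<delta> where "\<delta> = \<epsilon> / (4 * (R + 1))"
    have \<delta>0: "\<delta> > 0" unfolding \<delta>_def using \<epsilon> R0 by simp
    have "((\<lambda>T. sum e T) \<longlongrightarrow> infsum e UNIV) (finite_subsets_at_top UNIV)"
      using es unfolding summable_iff_has_sum_infsum has_sum_def .
    then have "\<forall>\<^sub>F T in finite_subsets_at_top UNIV. dist (sum e T) (infsum e UNIV) < \<delta>"
      by (rule tendsto_iff[THEN iffD1, rule_format, OF _ \<delta>0])
    then obtain S where S: "finite S" and Sd0: "\<forall>Y. finite Y \<and> S \<subseteq> Y \<and> Y \<subseteq> UNIV \<longrightarrow> dist (sum e Y) (infsum e UNIV) < \<delta>"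
      unfolding eventually_finite_subsets_at_top by auto
    have Sd: "dist (sum e S) (infsum e UNIV) < \<delta>" using Sd0 S by auto
    have tail: "infsum e (UNIV - S) < \<delta>"
    proof -
      have "infsum e (UNIV - S) = infsum e UNIV - sum e S"
        using infsum_Diff[OF es _ subset_UNIV, of S] S by simp
      then show ?thesis using Sd by (simp add: dist_real_def)
    qed
    define \<eta> where "\<eta> = \<epsilon> / (2 * (E + 1))"
    have \<eta>0: "\<eta> > 0" unfolding \<eta>_def using \<epsilon> E0 by simp
    have evx: "\<forall>\<^sub>F b in F. \<forall>x\<in>S. l2norm (vdiff (mapply b (delta x)) (mapply a (delta x))) < \<eta>"
    proof (rule eventually_ball_finite[OF S], intro ballI)
      fix x assume "x \<in> S"
      have "((\<lambda>b. l2norm (vdiff (mapply b (delta x)) (mapply a (delta x)))) \<longlongrightarrow> 0) F"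
        using st delta_l2 by (rule bspec)
      then have "\<forall>\<^sub>F b in F. dist (l2norm (vdiff (mapply b (delta x)) (mapply a (delta x)))) 0 < \<eta>"
        by (rule tendsto_iff[THEN iffD1, rule_format, OF _ \<eta>0])
      then show "\<forall>\<^sub>F b in F. l2norm (vdiff (mapply b (delta x)) (mapply a (delta x))) < \<eta>"
        by (rule eventually_mono) (simp add: dist_real_def l2norm_nonneg)
    qed
    show "\<forall>\<^sub>F b in F. dist (\<psi> b) (\<psi> a) < \<epsilon>"
      using ev evx
    proof (eventually_elim)
      case (elim b)
      then have bu: "b \<in> uroe" and bR: "opnorm b \<le> R"
        and close: "\<And>x. x \<in> S \<Longrightarrow> l2norm (vdiff (mapply b (delta x)) (mapply a (delta x))) < \<eta>" by auto
      have bb: "bounded_op b" by (rule uroe_bounded[OF bu])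
      define g where "g x = (b x x - a x x) * \<phi> (ematrix x)" for x
      have ng: "norm (g x) = cmod (b x x - a x x) * e x" for x
        unfolding g_def e_def by (subst ew_real[OF P]) (simp add: norm_mult ew_pos[OF P])
      have gs: "g summable_on UNIV"
        using infsum_diff_gen(2)[OF psi_summable[OF P bb] psi_summable[OF P ab]]
        unfolding g_def by (simp add: left_diff_distrib)
      have dpsi: "\<psi> b - \<psi> a = infsum g UNIV"
        using infsum_diff_gen(1)[OF psi_summable[OF P bb] psi_summable[OF P ab]]
        unfolding g_def \<psi>_def by (simp add: left_diff_distrib)
      have d2R: "cmod (b x x - a x x) \<le> 2 * R" for x
        using norm_triangle_ineq4[of "b x x" "a x x"] entry_bound[OF ab, of x x] entry_bound[OF bb, of x x] aR bR
        by linarith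
      have ng2: "norm (g x) \<le> 2 * R * e x" for x unfolding ng by (rule mult_right_mono[OF d2R e0])
      have ngs: "(\<lambda>x. norm (g x)) summable_on UNIV"
        by (rule summable_on_comparison_test[OF summable_on_cmult_right[OF es, of "2 * R"] ng2]) simp
      have split: "infsum g UNIV = sum g S + infsum g (UNIV - S)"
        using infsum_Diff[OF gs _ subset_UNIV, of S] S by simp
      have b1: "cmod (sum g S) \<le> \<eta> * E"
      proof -
        have "cmod (sum g S) \<le> (\<Sum>x\<in>S. norm (g x))" by (rule norm_sum)
        also have "\<dots> \<le> (\<Sum>x\<in>S. \<eta> * e x)"
        proof (rule sum_mono)
          fix x assume "x \<in> S"
          have "cmod (b x x - a x x) \<le> \<eta>"
            using diag_diff_bound[OF ab bb, of x] close[OF \<open>x \<in> S\<close>] by simp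
          then show "norm (g x) \<le> \<eta> * e x" unfolding ng by (rule mult_right_mono[OF _ e0])
        qed
        also have "\<dots> = \<eta> * sum e S" by (simp add: sum_distrib_left)
        also have "\<dots> \<le> \<eta> * E" using eS[OF S] \<eta>0 by (simp add: mult_left_mono)
        finally show ?thesis .
      qed
      have b2: "cmod (infsum g (UNIV - S)) \<le> 2 * R * \<delta>"
      proof -
        have ngs': "(\<lambda>x. norm (g x)) summable_on (UNIV - S)"
          by (rule summable_on_subset_banach[OF ngs]) auto
        have es': "e summable_on (UNIV - S)" by (rule summable_on_subset_banach[OF es]) auto
        have "cmod (infsum g (UNIV - S)) \<le> infsum (\<lambda>x. norm (g x)) (UNIV - S)"
          by (rule Infinite_Sum.norm_infsum_bound[OF ngs'])
        also have "\<dots> \<le> infsum (\<lambda>x. 2 * R * e x) (UNIV - S)"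
          by (rule infsum_mono[OF ngs' summable_on_cmult_right[OF es'] ng2])
        also have "\<dots> = 2 * R * infsum e (UNIV - S)" by (simp add: infsum_cmult_right')
        also have "\<dots> \<le> 2 * R * \<delta>" using tail R0 by (simp add: mult_left_mono)
        finally show ?thesis .
      qed
      have "dist (\<psi> b) (\<psi> a) = cmod (sum g S + infsum g (UNIV - S))"
        by (simp add: dist_norm dpsi split)
      also have "\<dots> \<le> \<eta> * E + 2 * R * \<delta>"
        using norm_triangle_ineq[of "sum g S" "infsum g (UNIV - S)"] b1 b2 by linarith
      also have "\<dots> < \<epsilon> / 2 + \<epsilon> / 2"
      proof (rule add_less_le_mono)
        show "\<eta> * E < \<epsilon> / 2"
        proof -
          have "\<eta> * E = \<epsilon> / 2 * (E / (E + 1))" unfolding \<eta>_def using E0 by (simp add: field_simps)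
          also have "\<dots> < \<epsilon> / 2 * 1" using \<epsilon> E0 by (intro mult_strict_left_mono) (auto simp: divide_less_eq)
          finally show ?thesis by simp
        qed
        show "2 * R * \<delta> \<le> \<epsilon> / 2"
        proof -
          have "2 * R * \<delta> = \<epsilon> / 2 * (R / (R + 1))" unfolding \<delta>_def using R0 by (simp add: field_simps)
          also have "\<dots> \<le> \<epsilon> / 2 * 1" using \<epsilon> R0 by (intro mult_left_mono) (auto simp: divide_le_eq)
          finally show ?thesis by simp
        qed
      qed
      finally show ?case by simp
    qed
  qed
qed


definition Bn :: "nat \<Rightarrow> 'x::metric_space set" where
  "Bn n = ball undefined (real n + 1)"

lemma Bn_finite: "ulf TYPE('x::metric_space) \<Longrightarrow> finite (Bn n :: 'x set)"
  unfolding ulf_def Bn_def by (metis add_nonneg_pos of_nat_0_le_iff zero_less_one)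

lemma Bn_mono: "n \<le> m \<Longrightarrow> Bn n \<subseteq> Bn m"
  unfolding Bn_def by (auto simp: subset_ball)

lemma Bn_ev: "\<forall>\<^sub>F n in sequentially. (x::'x::metric_space) \<in> Bn n"
proof -
  obtain N :: nat where "dist undefined x < real N" using reals_Archimedean2 by blast
  then show ?thesis unfolding Bn_def eventually_sequentially
    by (intro exI[of _ N]) auto
qed

lemma Bn_filterlim:
  assumes U: "ulf TYPE('x::metric_space)"
  shows "filterlim (Bn :: nat \<Rightarrow> 'x set) (finite_subsets_at_top UNIV) sequentially"
  unfolding filterlim_iff
proof (intro allI impI)
  fix P assume "eventually P (finite_subsets_at_top (UNIV :: 'x set))"
  then obtain X where X: "finite X" and PX: "\<And>Y. finite Y \<Longrightarrow> X \<subseteq> Y \<Longrightarrow> P Y"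
    unfolding eventually_finite_subsets_at_top by auto
  have "\<forall>\<^sub>F n in sequentially. \<forall>x\<in>X. x \<in> Bn n"
    by (rule eventually_ball_finite[OF X]) (auto intro: Bn_ev)
  then show "\<forall>\<^sub>F n in sequentially. P (Bn n)"
    by (rule eventually_mono) (auto intro!: PX Bn_finite[OF U])
qed

lemma qS_tail:
  assumes U: "ulf TYPE('x::metric_space)" and w: "w \<in> l2"
  shows "((\<lambda>n. l2norm (\<lambda>x::'x. qS (Bn n) x * w x)) \<longlongrightarrow> 0) sequentially"
proof -
  have "((\<lambda>T. l2norm (vdiff w (trunc T w))) \<longlongrightarrow> 0) (finite_subsets_at_top UNIV)"
    by (rule trunc_tendsto[OF w])
  from filterlim_compose[OF this Bn_filterlim[OF U]]
  have "((\<lambda>n. l2norm (vdiff w (trunc (Bn n) w))) \<longlongrightarrow> 0) sequentially" .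
  moreover have "vdiff w (trunc T w) = (\<lambda>x. qS T x * w x)" for T
    by (auto simp: vdiff_def trunc_def qS_def)
  ultimately show ?thesis by simp
qed

lemma opnorm_exists:
  assumes b: "bounded_op M" and gt: "opnorm M > c"
  shows "\<exists>v. v \<in> l2 \<and> l2norm v \<le> 1 \<and> l2norm (mapply M v) > c"
proof (rule ccontr)
  assume "\<not> ?thesis"
  then have "\<forall>v. v \<in> l2 \<and> l2norm v \<le> 1 \<longrightarrow> l2norm (mapply M v) \<le> c" by auto
  then have "opnorm M \<le> c" unfolding opnorm_def
    by (intro cSup_least) (auto intro!: exI[of _ "\<lambda>x. 0"] simp: zero_l2 zero_norm)
  then show False using gt by simp
qed

lemma mono_null:
  fixes f :: "nat \<Rightarrow> real"
  assumes mono: "\<And>n m. n \<le> m \<Longrightarrow> f m \<le> f n" and nn: "\<And>n. f n \<ge> 0"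
    and small: "\<And>\<epsilon>. \<epsilon> > 0 \<Longrightarrow> \<exists>n. f n < \<epsilon>"
  shows "f \<longlonglongrightarrow> 0"
proof (rule LIMSEQ_I)
  fix r :: real assume r: "r > 0"
  obtain n where "f n < r" using small[OF r] by blast
  then have "\<forall>m\<ge>n. norm (f m - 0) < r" using mono nn by (smt (verit) real_norm_def)
  then show "\<exists>no. \<forall>m\<ge>no. norm (f m - 0) < r" by blast
qed

lemma qS_Bn_mult: "n \<le> m \<Longrightarrow> qS (Bn m) x * qS (Bn n) x = qS (Bn m) x"
  using Bn_mono[of n m] by (auto simp: qS_def)

lemma left_tail:
  assumes U: "ulf TYPE('x::metric_space)" and C: "compact_op (a :: 'x mat)"
  shows "(\<lambda>n. opnorm (lmul (qS (Bn n)) a)) \<longlonglongrightarrow> 0"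
proof (rule mono_null)
  have ab: "bounded_op a" using C by (simp add: compact_op_def)
  show "opnorm (lmul (qS (Bn m)) a) \<le> opnorm (lmul (qS (Bn n)) a)" if "n \<le> m" for n m
  proof -
    have eq: "lmul (qS (Bn m)) a = lmul (qS (Bn m)) (lmul (qS (Bn n)) a)"
      by (intro ext) (simp add: lmul_def mult.assoc[symmetric] qS_Bn_mult[OF that])
    show ?thesis by (subst eq) (rule bounded_lmul(2)[OF bounded_lmul(1)[OF ab qS_le] qS_le])
  qed
  show "opnorm (lmul (qS (Bn n)) a) \<ge> 0" for n by (rule opnorm_nonneg[OF bounded_lmul(1)[OF ab qS_le]])
  show "\<exists>n. opnorm (lmul (qS (Bn n)) a) < \<epsilon>" if \<epsilon>: "\<epsilon> > 0" for \<epsilon>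
  proof (rule ccontr)
    assume "\<not> ?thesis"
    then have ge1: "opnorm (lmul (qS (Bn n)) a) \<ge> \<epsilon>" for n by (simp add: not_less)
    have ge: "opnorm (lmul (qS (Bn n)) a) > \<epsilon> / 2" for n using \<epsilon> ge1[of n] by linarith
    have "\<forall>n. \<exists>v. v \<in> l2 \<and> l2norm v \<le> 1 \<and> l2norm (mapply (lmul (qS (Bn n)) a) v) > \<epsilon> / 2"
      using opnorm_exists[OF bounded_lmul(1)[OF ab qS_le] ge] by blast
    then obtain v where v: "\<And>n. v n \<in> l2" "\<And>n. l2norm (v n) \<le> 1"
      and big: "\<And>n. l2norm (mapply (lmul (qS (Bn n)) a) (v n)) > \<epsilon> / 2" by metis
    obtain r w where r: "strict_mono r" and w: "w \<in> l2"
      and cv: "(\<lambda>k. l2norm (vdiff (mapply a (v (r k))) w)) \<longlonglongrightarrow> 0"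
      using C v unfolding compact_op_def by blast
    have tw: "(\<lambda>k. l2norm (\<lambda>x. qS (Bn (r k)) x * w x)) \<longlonglongrightarrow> 0"
      using filterlim_compose[OF qS_tail[OF U w] filterlim_subseq[OF r]] by simp
    have bound: "l2norm (mapply (lmul (qS (Bn (r k))) a) (v (r k))) \<le>
        l2norm (vdiff (mapply a (v (r k))) w) + l2norm (\<lambda>x. qS (Bn (r k)) x * w x)" for k
    proof -
      define u where "u = mapply a (v (r k))"
      define q where "q = qS (Bn (r k) :: 'x set)"
      have u: "u \<in> l2" unfolding u_def by (rule bounded_l2[OF ab v(1)])
      have d: "vdiff u w \<in> l2" by (rule l2_diff(1)[OF u w])
      have ql: "\<And>x. cmod (q x) \<le> 1" unfolding q_def by (rule qS_le)
      have e: "(\<lambda>x. q x * u x) = (\<lambda>x. q x * vdiff u w x + q x * w x)"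
        by (auto simp: vdiff_def algebra_simps)
      have "l2norm (\<lambda>x. q x * u x) \<le> l2norm (\<lambda>x. q x * vdiff u w x) + l2norm (\<lambda>x. q x * w x)"
        unfolding e by (rule l2_add(2)[OF dvec_l2(1)[OF d ql] dvec_l2(1)[OF w ql]])
      also have "\<dots> \<le> l2norm (vdiff u w) + l2norm (\<lambda>x. q x * w x)"
        using dvec_l2(2)[OF d ql] by simp
      finally show ?thesis unfolding u_def q_def mapply_lmul .
    qed
    have "(\<lambda>k. l2norm (vdiff (mapply a (v (r k))) w) + l2norm (\<lambda>x. qS (Bn (r k)) x * w x)) \<longlonglongrightarrow> 0 + 0"
      by (rule tendsto_add[OF cv tw])
    then have "\<forall>\<^sub>F k in sequentially. l2norm (vdiff (mapply a (v (r k))) w) + l2norm (\<lambda>x. qS (Bn (r k)) x * w x) < \<epsilon> / 2"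
      using \<epsilon> by (intro order_tendstoD(2)) auto
    then obtain k where "l2norm (vdiff (mapply a (v (r k))) w) + l2norm (\<lambda>x. qS (Bn (r k)) x * w x) < \<epsilon> / 2"
      unfolding eventually_sequentially by auto
    then show False using bound[of k] big[of "r k"] by linarith
  qed
qed

lemma right_tail:
  assumes U: "ulf TYPE('x::metric_space)" and C: "compact_op (a :: 'x mat)"
  shows "(\<lambda>n. opnorm (rmul a (qS (Bn n)))) \<longlonglongrightarrow> 0"
proof (rule mono_null)
  have ab: "bounded_op a" using C by (simp add: compact_op_def)
  show "opnorm (rmul a (qS (Bn m))) \<le> opnorm (rmul a (qS (Bn n)))" if "n \<le> m" for n m
  proof -
    have eq: "rmul a (qS (Bn m)) = rmul (rmul a (qS (Bn n))) (qS (Bn m))"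
      by (intro ext) (simp add: rmul_def mult.assoc qS_Bn_mult[OF that] mult.commute[of "qS (Bn n) _"])
    show ?thesis by (subst eq) (rule bounded_rmul(2)[OF bounded_rmul(1)[OF ab qS_le] qS_le])
  qed
  show "opnorm (rmul a (qS (Bn n))) \<ge> 0" for n by (rule opnorm_nonneg[OF bounded_rmul(1)[OF ab qS_le]])
  show "\<exists>n. opnorm (rmul a (qS (Bn n))) < \<epsilon>" if \<epsilon>: "\<epsilon> > 0" for \<epsilon>
  proof (rule ccontr)
    assume "\<not> ?thesis"
    then have ge1: "opnorm (rmul a (qS (Bn n))) \<ge> \<epsilon>" for n by (simp add: not_less)
    have ge: "opnorm (rmul a (qS (Bn n))) > \<epsilon> / 2" for n using \<epsilon> ge1[of n] by linarith
    have "\<forall>n. \<exists>u. u \<in> l2 \<and> l2norm u \<le> 1 \<and> l2norm (mapply (rmul a (qS (Bn n))) u) > \<epsilon> / 2"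
      using opnorm_exists[OF bounded_rmul(1)[OF ab qS_le] ge] by blast
    then obtain u where u: "\<And>n. u n \<in> l2" "\<And>n. l2norm (u n) \<le> 1"
      and big: "\<And>n. l2norm (mapply (rmul a (qS (Bn n))) (u n)) > \<epsilon> / 2" by metis
    define v where "v n = (\<lambda>y. qS (Bn n :: 'x set) y * u n y)" for n
    have v: "v n \<in> l2" "l2norm (v n) \<le> 1" for n
      using dvec_l2[where d="qS (Bn n :: 'x set)", OF u(1)[of n] qS_le] u(2)[of n] unfolding v_def by auto
    have big': "l2norm (mapply a (v n)) > \<epsilon> / 2" for n
      using big[of n] unfolding mapply_rmul v_def .
    obtain r w where r: "strict_mono r" and w: "w \<in> l2"
      and cv: "(\<lambda>k. l2norm (vdiff (mapply a (v (r k))) w)) \<longlonglongrightarrow> 0"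
      using C v unfolding compact_op_def by blast
    have w0: "w x = 0" for x
    proof -
      have l1: "(\<lambda>k. mapply a (v (r k)) x) \<longlonglongrightarrow> w x"
      proof (rule LIM_zero_cancel, rule Lim_null_comparison[OF _ cv])
        show "\<forall>\<^sub>F k in sequentially. norm (mapply a (v (r k)) x - w x) \<le> l2norm (vdiff (mapply a (v (r k))) w)"
        proof (intro always_eventually allI)
          fix k
          have "vdiff (mapply a (v (r k))) w \<in> l2" by (rule l2_diff(1)[OF bounded_l2[OF ab v(1)] w])
          from l2_coord[OF this, of x] show "norm (mapply a (v (r k)) x - w x) \<le> l2norm (vdiff (mapply a (v (r k))) w)"
            by (simp add: vdiff_def)
        qed
      qed
      have row: "(\<lambda>y. a x y) \<in> l2" by (rule row_l2(1)[OF ab])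
      have tr: "(\<lambda>k. l2norm (\<lambda>y. qS (Bn (r k)) y * a x y)) \<longlonglongrightarrow> 0"
        using filterlim_compose[OF qS_tail[OF U row] filterlim_subseq[OF r]] by simp
      have l2: "(\<lambda>k. mapply a (v (r k)) x) \<longlonglongrightarrow> 0"
      proof (rule Lim_null_comparison[OF _ tr])
        show "\<forall>\<^sub>F k in sequentially. norm (mapply a (v (r k)) x) \<le> l2norm (\<lambda>y. qS (Bn (r k)) y * a x y)"
        proof (intro always_eventually allI)
          fix k
          define q where "q = qS (Bn (r k) :: 'x set)"
          have ql: "\<And>y. cmod (q y) \<le> 1" unfolding q_def by (rule qS_le)
          have "mapply a (v (r k)) x = infsum (\<lambda>y. (q y * a x y) * u (r k) y) UNIV"
            unfolding mapply_def v_def q_def by (simp add: mult_ac)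
          also have "cmod \<dots> \<le> l2norm (\<lambda>y. q y * a x y) * l2norm (u (r k))"
            by (rule cs_complex[OF dvec_l2(1)[OF row ql] u(1)])
          also have "\<dots> \<le> l2norm (\<lambda>y. q y * a x y) * 1"
            by (rule mult_left_mono[OF u(2) l2norm_nonneg])
          finally show "norm (mapply a (v (r k)) x) \<le> l2norm (\<lambda>y. qS (Bn (r k)) y * a x y)"
            unfolding q_def by simp
        qed
      qed
      show ?thesis using LIMSEQ_unique[OF l1 l2] .
    qed
    have "vdiff (mapply a (v (r k))) w = mapply a (v (r k))" for k
      by (auto simp: vdiff_def w0)
    then have "(\<lambda>k. l2norm (mapply a (v (r k)))) \<longlonglongrightarrow> 0" using cv by simp
    then have "\<forall>\<^sub>F k in sequentially. l2norm (mapply a (v (r k))) < \<epsilon> / 2"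
      using \<epsilon> by (intro order_tendstoD(2)) auto
    then obtain k where "l2norm (mapply a (v (r k))) < \<epsilon> / 2"
      unfolding eventually_sequentially by auto
    then show False using big'[of "r k"] by linarith
  qed
qed

lemma compact_uroe:
  assumes U: "ulf TYPE('x::metric_space)" and C: "compact_op (a :: 'x mat)"
  shows "a \<in> uroe"
proof (rule uroeI)
  show ab: "bounded_op a" using C by (simp add: compact_op_def)
  fix \<epsilon> :: real assume \<epsilon>: "\<epsilon> > 0"
  have "\<forall>\<^sub>F n in sequentially. opnorm (lmul (qS (Bn n)) a) < \<epsilon> / 2"
    using \<epsilon> by (intro order_tendstoD(2)[OF left_tail[OF U C]]) auto
  moreover have "\<forall>\<^sub>F n in sequentially. opnorm (rmul a (qS (Bn n))) < \<epsilon> / 2"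
    using \<epsilon> by (intro order_tendstoD(2)[OF right_tail[OF U C]]) auto
  ultimately have "\<forall>\<^sub>F n in sequentially. opnorm (lmul (qS (Bn n)) a) < \<epsilon> / 2 \<and> opnorm (rmul a (qS (Bn n))) < \<epsilon> / 2"
    by (rule eventually_conj)
  then obtain n where n1: "opnorm (lmul (qS (Bn n)) a) < \<epsilon> / 2" and n2: "opnorm (rmul a (qS (Bn n))) < \<epsilon> / 2"
    unfolding eventually_sequentially by auto
  define p where "p = pS (Bn n :: 'x set)"
  define q where "q = qS (Bn n :: 'x set)"
  have pl: "\<And>x. cmod (p x) \<le> 1" unfolding p_def by (rule pS_le)
  have ql: "\<And>x. cmod (q x) \<le> 1" unfolding q_def by (rule qS_le)
  define b where "b = rmul (lmul p a) p"
  have bb: "bounded_op b" unfolding b_def by (intro bounded_rmul(1) bounded_lmul(1) ab pl)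
  have fp: "finite_prop b"
    unfolding finite_prop_def
  proof (intro exI[of _ "2 * (real n + 1)"] allI impI)
    fix x y assume "b x y \<noteq> 0"
    then have "x \<in> Bn n" "y \<in> Bn n" unfolding b_def rmul_def lmul_def p_def pS_def by (auto split: if_splits)
    then have "dist undefined x < real n + 1" "dist undefined y < real n + 1" unfolding Bn_def by auto
    then show "dist x y \<le> 2 * (real n + 1)" using dist_triangle[of x y undefined] by (simp add: dist_commute)
  qed
  have eq: "msub a b = madd (lmul q a) (lmul p (rmul a q))"
    by (intro ext) (auto simp: msub_def madd_def b_def rmul_def lmul_def p_def q_def pS_def qS_def)
  have "opnorm (msub a b) \<le> opnorm (lmul q a) + opnorm (lmul p (rmul a q))"
    unfolding eq by (intro bounded_madd(2) bounded_lmul(1) bounded_rmul(1) ab pl ql)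
  also have "\<dots> \<le> opnorm (lmul q a) + opnorm (rmul a q)"
    using bounded_lmul(2)[OF bounded_rmul(1)[OF ab ql] pl] by simp
  also have "\<dots> < \<epsilon>" using n1 n2 unfolding q_def by simp
  finally show "\<exists>b. bounded_op b \<and> finite_prop b \<and> opnorm (msub a b) < \<epsilon>"
    using bb fp by blast
qed

lemma compact_vanish:
  fixes \<phi> :: "'x::metric_space mat \<Rightarrow> complex"
  assumes P: "pos_functional uroe \<phi>" and K: "kms_condition uroe h \<beta> \<phi>"
    and U: "ulf TYPE('x)" and C: "compact_op a"
  shows "\<phi> a - infsum (\<lambda>x. a x x * \<phi> (ematrix x)) UNIV = 0"
proof -
  have a: "a \<in> uroe" by (rule compact_uroe[OF U C])
  have ab: "bounded_op a" by (rule uroe_bounded[OF a])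
  define s where "s n = \<phi> a - (\<Sum>x\<in>Bn n. a x x * \<phi> (ematrix x))" for n
  have l1: "s \<longlonglongrightarrow> \<phi> a - infsum (\<lambda>x. a x x * \<phi> (ematrix x)) UNIV"
    unfolding s_def
    by (intro tendsto_diff tendsto_const filterlim_compose[OF psi_has_sum[OF P ab] Bn_filterlim[OF U]])
  have l2: "s \<longlonglongrightarrow> 0"
  proof (rule Lim_null_comparison)
    show "(\<lambda>n. 2 * opnorm (lmul (qS (Bn n)) a) * Re (\<phi> idm)) \<longlonglongrightarrow> 0"
      using tendsto_mult[OF tendsto_mult[OF tendsto_const left_tail[OF U C]] tendsto_const, of 2 "Re (\<phi> idm)"]
      by simp
    show "\<forall>\<^sub>F n in sequentially. norm (s n) \<le> 2 * opnorm (lmul (qS (Bn n)) a) * Re (\<phi> idm)"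
    proof (intro always_eventually allI)
      fix n
      have "s n = \<phi> (cut (Bn n) a)" unfolding s_def by (rule key_decomp[OF P K a Bn_finite[OF U]])
      also have "norm \<dots> \<le> 2 * opnorm (cut (Bn n) a) * Re (\<phi> idm)" by (rule phi_bound[OF P uroe_cut[OF a]])
      also have "\<dots> \<le> 2 * opnorm (lmul (qS (Bn n)) a) * Re (\<phi> idm)"
      proof -
        have "opnorm (cut (Bn n) a) \<le> opnorm (lmul (qS (Bn n)) a)"
          unfolding cut_def by (rule bounded_rmul(2)[OF bounded_lmul(1)[OF ab qS_le] qS_le])
        moreover have "Re (\<phi> idm) \<ge> 0" using phi_pos[OF P uroe_idm idm_pos] by simp
        ultimately show ?thesis by (simp add: mult_right_mono)
      qed
      finally show "norm (s n) \<le> 2 * opnorm (lmul (qS (Bn n)) a) * Re (\<phi> idm)" .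
    qed
  qed
  show ?thesis using LIMSEQ_unique[OF l1 l2] .
qed


theorem proposition4p1:
  fixes h :: "'x::metric_space \<Rightarrow> real" and \<beta> :: real and \<phi> :: "'x mat \<Rightarrow> complex"
  assumes "ulf TYPE('x)"
    and "coarse_fun h"
    and "is_state uroe \<phi>"
    and "kms_condition uroe h \<beta> \<phi>"
  defines "\<psi> \<equiv> (\<lambda>a. infsum (\<lambda>x. a x x * \<phi> (ematrix x)) UNIV)"
  shows "(\<forall>a\<in>uroe. (\<lambda>x. a x x * \<phi> (ematrix x)) summable_on UNIV)
    \<and> pos_functional uroe \<psi>
    \<and> strongly_continuous uroe \<psi>
    \<and> kms_condition uroe h \<beta> \<psi>
    \<and> pos_functional uroe (\<lambda>a. \<phi> a - \<psi> a)
    \<and> kms_condition uroe h \<beta> (\<lambda>a. \<phi> a - \<psi> a)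
    \<and> (\<forall>a. compact_op a \<longrightarrow> \<phi> a - \<psi> a = 0)"
proof -
  have U: "ulf TYPE('x)" by fact
  have P: "pos_functional uroe \<phi>" using assms(3) by (simp add: is_state_def)
  have K: "kms_condition uroe h \<beta> \<phi>" by fact
  have S: "\<forall>a\<in>uroe. (\<lambda>x. a x x * \<phi> (ematrix x)) summable_on UNIV"
    using psi_summable[OF P] uroe_bounded by blast
  have PP: "pos_functional uroe \<psi>" unfolding \<psi>_def by (rule psi_pos_functional[OF P])
  have SC: "strongly_continuous uroe \<psi>" unfolding \<psi>_def by (rule psi_strong[OF P])
  have KP: "kms_condition uroe h \<beta> \<psi>" unfolding \<psi>_def by (rule psi_kms[OF P K])
  have PD: "pos_functional uroe (\<lambda>a. \<phi> a - \<psi> a)"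
    unfolding pos_functional_def lin_functional_def
  proof (intro conjI ballI allI impI)
    fix a b :: "'x mat" assume a: "a \<in> uroe" and b: "b \<in> uroe"
    show "\<phi> (madd a b) - \<psi> (madd a b) = \<phi> a - \<psi> a + (\<phi> b - \<psi> b)"
      using phi_add[OF P a b] phi_add[OF PP a b] by simp
  next
    fix c and a :: "'x mat" assume a: "a \<in> uroe"
    show "\<phi> (mscale c a) - \<psi> (mscale c a) = c * (\<phi> a - \<psi> a)"
      using phi_scale[OF P a] phi_scale[OF PP a] by (simp add: right_diff_distrib)
  next
    fix a :: "'x mat" assume a: "a \<in> uroe" and p: "pos_op a"
    show "Im (\<phi> a - \<psi> a) = 0" and "0 \<le> Re (\<phi> a - \<psi> a)"
      using diff_pos[OF P K a p] unfolding \<psi>_def by auto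
  qed
  have KD: "kms_condition uroe h \<beta> (\<lambda>a. \<phi> a - \<psi> a)"
    using K KP unfolding kms_condition_def by simp
  have CV: "\<forall>a. compact_op a \<longrightarrow> \<phi> a - \<psi> a = 0"
    unfolding \<psi>_def using compact_vanish[OF P K U] by blast
  show ?thesis using S PP SC KP PD KD CV by blast
qed


end
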